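(* Let $(W,\cdot,\iota)$ be any constraint domain. In the HyLL sequent calculus (which has no cut rule), for all sets $\Gamma$ and multisets $\Delta,\Delta'$ of judgements, propositions $A,C$ and worlds $u,w$: (1) if $\Gamma;\Delta\Rightarrow A@u$ and $\Gamma;\Delta',A@u\Rightarrow C@w$ are derivable, then $\Gamma;\Delta,\Delta'\Rightarrow C@w$ is derivable; (2) if $\Gamma;\cdot\Rightarrow A@u$ and $\Gamma,A@u;\Delta\Rightarrow C@w$ are derivable, then $\Gamma;\Delta\Rightarrow C@w$ is derivable.
   Context: HyLL (hybrid linear logic). A constraint domain is a monoid $(W,\cdot,\iota)$; its elements are called worlds. World expressions are built from elements of $W$, world variables $u,v,\dots$ and $\cdot$, and are considered up to the monoid equations. Terms are untyped first-order terms built from term variables $x,y,\dots$ and function symbols; world variables never occur in terms and term variables never occur in worlds. Propositions: $A,B ::= a\,\vec t \mid A\otimes B\mid \mathbf 1\mid A\multimap B\mid A\,\&\,B\mid \top\mid A\oplus B\mid \mathbf 0\mid\ !A\mid \forall x.A\mid \exists x.A\mid (A\ \mathsf{at}\ w)\mid \downarrow u.A\mid \forall u.A\mid\exists u.A$, where $a\,\vec t$ is an atomic predicate applied to terms, $x$ a term variable, $u$ a world variable (bound in $\downarrow u.A,\forall u.A,\exists u.A$), and $w$ a world expression. $\alpha$ ranges over variables of either kind, $\tau$ over terms or worlds accordingly, $[\tau/\alpha]A$ is capture-avoiding substitution; propositions are taken up to $\alpha$-conversion. A judgement is $A@w$. A sequent is $\Gamma;\Delta\Rightarrow C@w$ with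 $\Gamma$ a set of judgements (unrestricted context) and $\Delta$ a multiset of judgements (linear context). Derivable sequents are those generated by the rules (premises $\Longrightarrow$ conclusion): init: $\Gamma; a\,\vec t@u\Rightarrow a\,\vec t@u$. copy: $\Gamma,A@u;\Delta,A@u\Rightarrow C@w \Longrightarrow \Gamma,A@u;\Delta\Rightarrow C@w$. $\otimes$R: $\Gamma;\Delta\Rightarrow A@w$ and $\Gamma;\Delta'\Rightarrow B@w\Longrightarrow\Gamma;\Delta,\Delta'\Rightarrow A\otimes B@w$. $\otimes$L: $\Gamma;\Delta,A@u,B@u\Rightarrow C@w\Longrightarrow\Gamma;\Delta,A\otimes B@u\Rightarrow C@w$. $\mathbf1$R: $\Gamma;\cdot\Rightarrow \mathbf 1@w$. $\mathbf 1$L: $\Gamma;\Delta\Rightarrow C@w\Longrightarrow\Gamma;\Delta,\mathbf 1@u\Rightarrow C@w$. $\multimap$R: $\Gamma;\Delta,A@w\Rightarrow B@w\Longrightarrow\Gamma;\Delta\Rightarrow A\multimap B@w$. $\multimap$L: $\Gamma;\Delta\Rightarrow A@u$ and $\Gamma;\Delta',B@u\Rightarrow C@w\Longrightarrow\Gamma;\Delta,\Delta',A\multimap B@u\Rightarrow C@w$. $\top$R: $\Gamma;\Delta\Rightarrow\top@w$. $\mathbf 0$L: $\Gamma;\Delta,\mathbf 0@u\Rightarrow C@w$. $\&$R: $\Gamma;\Delta\Rightarrow A@w$ and $\Gamma;\Delta\Rightarrow B@w\Longrightarrow\Gamma;\Delta\Rightarrow A\&B@w$. $\&$L$_i$ ($i=1,2$):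 $\Gamma;\Delta,A_i@u\Rightarrow C@w\Longrightarrow\Gamma;\Delta,A_1\&A_2@u\Rightarrow C@w$. $\oplus$R$_i$: $\Gamma;\Delta\Rightarrow A_i@w\Longrightarrow\Gamma;\Delta\Rightarrow A_1\oplus A_2@w$. $\oplus$L: $\Gamma;\Delta,A@u\Rightarrow C@w$ and $\Gamma;\Delta,B@u\Rightarrow C@w\Longrightarrow\Gamma;\Delta,A\oplus B@u\Rightarrow C@w$. $\forall$R: $\Gamma;\Delta\Rightarrow A@w\Longrightarrow\Gamma;\Delta\Rightarrow\forall\alpha.A@w$ ($\alpha$ fresh for the conclusion). $\forall$L: $\Gamma;\Delta,[\tau/\alpha]A@u\Rightarrow C@w\Longrightarrow\Gamma;\Delta,\forall\alpha.A@u\Rightarrow C@w$. $\exists$R: $\Gamma;\Delta\Rightarrow[\tau/\alpha]A@w\Longrightarrow\Gamma;\Delta\Rightarrow\exists\alpha.A@w$. $\exists$L: $\Gamma;\Delta,A@u\Rightarrow C@w\Longrightarrow\Gamma;\Delta,\exists\alpha.A@u\Rightarrow C@w$ ($\alpha$ fresh for the conclusion). $!$R: $\Gamma;\cdot\Rightarrow A@w\Longrightarrow\Gamma;\cdot\Rightarrow\ !A@w$. $!$L: $\Gamma,A@u;\Delta\Rightarrow C@w\Longrightarrow\Gamma;\Delta,!A@u\Rightarrow C@w$. $\mathsf{at}$R: $\Gamma;\Delta\Rightarrow A@u\Longrightarrow\Gamma;\Delta\Rightarrow(A\ \mathsf{at}\ u)@v$. $\mathsf{at}$L: $\Gamma;\Delta,A@u\Rightarrow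 C@w\Longrightarrow\Gamma;\Delta,(A\ \mathsf{at}\ u)@v\Rightarrow C@w$. $\downarrow$R: $\Gamma;\Delta\Rightarrow[w/u]A@w\Longrightarrow\Gamma;\Delta\Rightarrow\downarrow u.A@w$. $\downarrow$L: $\Gamma;\Delta,[v/u]A@v\Rightarrow C@w\Longrightarrow\Gamma;\Delta,\downarrow u.A@v\Rightarrow C@w$. *)

theory Defs
  imports Main "HOL-Library.Multiset"
begin

section \<open>Syntax of HyLL (locally nameless representation)\<close>

text \<open>Bound variables
  are represented by de Bruijn indices (separately for term binders and world
  binders), so that propositions are automatically identified up to alpha-conversion.\<close>

datatype 'f trm = TFree nat | TBnd nat | TApp 'f "'f trm list"

datatype 'w wexp = WElem 'w | WFree nat | WBnd nat | WMul "'w wexp" "'w wexp"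

inductive weq :: "'w::monoid_mult wexp \<Rightarrow> 'w wexp \<Rightarrow> bool" where
  weq_refl: "weq a a"
| weq_sym: "weq a b \<Longrightarrow> weq b a"
| weq_trans: "weq a b \<Longrightarrow> weq b c \<Longrightarrow> weq a c"
| weq_cong: "weq a a' \<Longrightarrow> weq b b' \<Longrightarrow> weq (WMul a b) (WMul a' b')"
| weq_assoc: "weq (WMul (WMul a b) c) (WMul a (WMul b c))"
| weq_unitl: "weq (WMul (WElem 1) a) a"
| weq_unitr: "weq (WMul a (WElem 1)) a"
| weq_elem: "weq (WMul (WElem x) (WElem y)) (WElem (x * y))"

lemma equivp_weq: "equivp weq"
  by (rule equivpI) (auto intro: reflpI sympI transpI weq.intros)

quotient_type (overloaded) 'w world = "'w::monoid_mult wexp" / weq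
  by (rule equivp_weq)

lift_definition wconst :: "'w::monoid_mult \<Rightarrow> 'w world" is WElem .
lift_definition wvar :: "nat \<Rightarrow> 'w::monoid_mult world" is WFree .
lift_definition wmul :: "'w::monoid_mult world \<Rightarrow> 'w world \<Rightarrow> 'w world" is WMul
  by (rule weq_cong)

primrec wopen_raw :: "nat \<Rightarrow> 'w wexp \<Rightarrow> 'w wexp \<Rightarrow> 'w wexp" where
  "wopen_raw k s (WElem a) = WElem a"
| "wopen_raw k s (WFree x) = WFree x"
| "wopen_raw k s (WBnd i) = (if i = k then s else WBnd i)"
| "wopen_raw k s (WMul a b) = WMul (wopen_raw k s a) (wopen_raw k s b)"

primrec wfv_raw :: "'w wexp \<Rightarrow> nat set" where
  "wfv_raw (WElem a) = {}"
| "wfv_raw (WFree x) = {x}"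
| "wfv_raw (WBnd i) = {}"
| "wfv_raw (WMul a b) = wfv_raw a \<union> wfv_raw b"

primrec wbv_raw :: "'w wexp \<Rightarrow> nat set" where
  "wbv_raw (WElem a) = {}"
| "wbv_raw (WFree x) = {}"
| "wbv_raw (WBnd i) = {i}"
| "wbv_raw (WMul a b) = wbv_raw a \<union> wbv_raw b"

lemma weq_wopen1: "weq a b \<Longrightarrow> weq (wopen_raw k s a) (wopen_raw k s b)"
  by (induction rule: weq.induct) (auto intro: weq.intros)

lemma weq_wopen2: "weq s s' \<Longrightarrow> weq (wopen_raw k s a) (wopen_raw k s' a)"
  by (induction a) (auto intro: weq.intros)

lift_definition wopen :: "nat \<Rightarrow> 'w::monoid_mult world \<Rightarrow> 'w world \<Rightarrow> 'w world" is wopen_raw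
  by (meson weq_trans weq_wopen1 weq_wopen2)

lift_definition wfv :: "'w::monoid_mult world \<Rightarrow> nat set" is wfv_raw
  by (erule weq.induct) auto

lift_definition wbv :: "'w::monoid_mult world \<Rightarrow> nat set" is wbv_raw
  by (erule weq.induct) auto

primrec topen_trm :: "nat \<Rightarrow> 'f trm \<Rightarrow> 'f trm \<Rightarrow> 'f trm" where
  "topen_trm k s (TFree x) = TFree x"
| "topen_trm k s (TBnd i) = (if i = k then s else TBnd i)"
| "topen_trm k s (TApp f ts) = TApp f (map (topen_trm k s) ts)"

primrec tfv_trm :: "'f trm \<Rightarrow> nat set" where
  "tfv_trm (TFree x) = {x}"
| "tfv_trm (TBnd i) = {}"
| "tfv_trm (TApp f ts) = \<Union> (set (map tfv_trm ts))"

primrec tbv_trm :: "'f trm \<Rightarrow> nat set" where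
  "tbv_trm (TFree x) = {}"
| "tbv_trm (TBnd i) = {i}"
| "tbv_trm (TApp f ts) = \<Union> (set (map tbv_trm ts))"

text \<open>Propositions. AllT/ExT bind a term variable, Down/AllW/ExW bind a world variable.\<close>
declare [[typedef_overloaded]]

datatype ('p, 'f, 'w::monoid_mult) hprop =
    Atm 'p "'f trm list"
  | Tensor "('p, 'f, 'w) hprop" "('p, 'f, 'w) hprop"
  | One
  | Lolli "('p, 'f, 'w) hprop" "('p, 'f, 'w) hprop"
  | With "('p, 'f, 'w) hprop" "('p, 'f, 'w) hprop"
  | Top
  | Plus "('p, 'f, 'w) hprop" "('p, 'f, 'w) hprop"
  | Zero
  | Bang "('p, 'f, 'w) hprop"
  | AllT "('p, 'f, 'w) hprop"
  | ExT "('p, 'f, 'w) hprop"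
  | AtW "('p, 'f, 'w) hprop" "'w world"
  | Down "('p, 'f, 'w) hprop"
  | AllW "('p, 'f, 'w) hprop"
  | ExW "('p, 'f, 'w) hprop"

primrec topen :: "nat \<Rightarrow> 'f trm \<Rightarrow> ('p, 'f, 'w::monoid_mult) hprop \<Rightarrow> ('p, 'f, 'w) hprop" where
  "topen k s (Atm p ts) = Atm p (map (topen_trm k s) ts)"
| "topen k s (Tensor A B) = Tensor (topen k s A) (topen k s B)"
| "topen k s One = One"
| "topen k s (Lolli A B) = Lolli (topen k s A) (topen k s B)"
| "topen k s (With A B) = With (topen k s A) (topen k s B)"
| "topen k s Top = Top"
| "topen k s (Plus A B) = Plus (topen k s A) (topen k s B)"
| "topen k s Zero = Zero"
| "topen k s (Bang A) = Bang (topen k s A)"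
| "topen k s (AllT A) = AllT (topen (Suc k) s A)"
| "topen k s (ExT A) = ExT (topen (Suc k) s A)"
| "topen k s (AtW A w) = AtW (topen k s A) w"
| "topen k s (Down A) = Down (topen k s A)"
| "topen k s (AllW A) = AllW (topen k s A)"
| "topen k s (ExW A) = ExW (topen k s A)"

primrec wopenp :: "nat \<Rightarrow> 'w world \<Rightarrow> ('p, 'f, 'w::monoid_mult) hprop \<Rightarrow> ('p, 'f, 'w) hprop" where
  "wopenp k s (Atm p ts) = Atm p ts"
| "wopenp k s (Tensor A B) = Tensor (wopenp k s A) (wopenp k s B)"
| "wopenp k s One = One"
| "wopenp k s (Lolli A B) = Lolli (wopenp k s A) (wopenp k s B)"
| "wopenp k s (With A B) = With (wopenp k s A) (wopenp k s B)"
| "wopenp k s Top = Top"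
| "wopenp k s (Plus A B) = Plus (wopenp k s A) (wopenp k s B)"
| "wopenp k s Zero = Zero"
| "wopenp k s (Bang A) = Bang (wopenp k s A)"
| "wopenp k s (AllT A) = AllT (wopenp k s A)"
| "wopenp k s (ExT A) = ExT (wopenp k s A)"
| "wopenp k s (AtW A w) = AtW (wopenp k s A) (wopen k s w)"
| "wopenp k s (Down A) = Down (wopenp (Suc k) s A)"
| "wopenp k s (AllW A) = AllW (wopenp (Suc k) s A)"
| "wopenp k s (ExW A) = ExW (wopenp (Suc k) s A)"

primrec tfv :: "('p, 'f, 'w::monoid_mult) hprop \<Rightarrow> nat set" where
  "tfv (Atm p ts) = \<Union> (set (map tfv_trm ts))"
| "tfv (Tensor A B) = tfv A \<union> tfv B"
| "tfv One = {}"
| "tfv (Lolli A B) = tfv A \<union> tfv B"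
| "tfv (With A B) = tfv A \<union> tfv B"
| "tfv Top = {}"
| "tfv (Plus A B) = tfv A \<union> tfv B"
| "tfv Zero = {}"
| "tfv (Bang A) = tfv A"
| "tfv (AllT A) = tfv A"
| "tfv (ExT A) = tfv A"
| "tfv (AtW A w) = tfv A"
| "tfv (Down A) = tfv A"
| "tfv (AllW A) = tfv A"
| "tfv (ExW A) = tfv A"

primrec wfvp :: "('p, 'f, 'w::monoid_mult) hprop \<Rightarrow> nat set" where
  "wfvp (Atm p ts) = {}"
| "wfvp (Tensor A B) = wfvp A \<union> wfvp B"
| "wfvp One = {}"
| "wfvp (Lolli A B) = wfvp A \<union> wfvp B"
| "wfvp (With A B) = wfvp A \<union> wfvp B"
| "wfvp Top = {}"
| "wfvp (Plus A B) = wfvp A \<union> wfvp B"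
| "wfvp Zero = {}"
| "wfvp (Bang A) = wfvp A"
| "wfvp (AllT A) = wfvp A"
| "wfvp (ExT A) = wfvp A"
| "wfvp (AtW A w) = wfvp A \<union> wfv w"
| "wfvp (Down A) = wfvp A"
| "wfvp (AllW A) = wfvp A"
| "wfvp (ExW A) = wfvp A"

text \<open>Genuine propositions
  of the paper are exactly the locally closed ones.\<close>
primrec tlc :: "nat \<Rightarrow> ('p, 'f, 'w::monoid_mult) hprop \<Rightarrow> bool" where
  "tlc k (Atm p ts) = (\<forall>t\<in>set ts. \<forall>i\<in>tbv_trm t. i < k)"
| "tlc k (Tensor A B) = (tlc k A \<and> tlc k B)"
| "tlc k One = True"
| "tlc k (Lolli A B) = (tlc k A \<and> tlc k B)"
| "tlc k (With A B) = (tlc k A \<and> tlc k B)"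
| "tlc k Top = True"
| "tlc k (Plus A B) = (tlc k A \<and> tlc k B)"
| "tlc k Zero = True"
| "tlc k (Bang A) = tlc k A"
| "tlc k (AllT A) = tlc (Suc k) A"
| "tlc k (ExT A) = tlc (Suc k) A"
| "tlc k (AtW A w) = tlc k A"
| "tlc k (Down A) = tlc k A"
| "tlc k (AllW A) = tlc k A"
| "tlc k (ExW A) = tlc k A"

primrec wlc :: "nat \<Rightarrow> ('p, 'f, 'w::monoid_mult) hprop \<Rightarrow> bool" where
  "wlc k (Atm p ts) = True"
| "wlc k (Tensor A B) = (wlc k A \<and> wlc k B)"
| "wlc k One = True"
| "wlc k (Lolli A B) = (wlc k A \<and> wlc k B)"
| "wlc k (With A B) = (wlc k A \<and> wlc k B)"
| "wlc k Top = True"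
| "wlc k (Plus A B) = (wlc k A \<and> wlc k B)"
| "wlc k Zero = True"
| "wlc k (Bang A) = wlc k A"
| "wlc k (AllT A) = wlc k A"
| "wlc k (ExT A) = wlc k A"
| "wlc k (AtW A w) = (wlc k A \<and> (\<forall>i\<in>wbv w. i < k))"
| "wlc k (Down A) = wlc (Suc k) A"
| "wlc k (AllW A) = wlc (Suc k) A"
| "wlc k (ExW A) = wlc (Suc k) A"

definition is_term :: "'f trm \<Rightarrow> bool" where
  "is_term t \<longleftrightarrow> tbv_trm t = {}"

definition is_world :: "'w::monoid_mult world \<Rightarrow> bool" where
  "is_world w \<longleftrightarrow> wbv w = {}"

definition is_prop :: "('p, 'f, 'w::monoid_mult) hprop \<Rightarrow> bool" where
  "is_prop A \<longleftrightarrow> tlc 0 A \<and> wlc 0 A"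

datatype ('p, 'f, 'w::monoid_mult) judg = Jdg "('p, 'f, 'w) hprop" "'w world"

fun is_judg :: "('p, 'f, 'w::monoid_mult) judg \<Rightarrow> bool" where
  "is_judg (Jdg A w) \<longleftrightarrow> is_prop A \<and> is_world w"

fun tfvj :: "('p, 'f, 'w::monoid_mult) judg \<Rightarrow> nat set" where
  "tfvj (Jdg A w) = tfv A"

fun wfvj :: "('p, 'f, 'w::monoid_mult) judg \<Rightarrow> nat set" where
  "wfvj (Jdg A w) = wfvp A \<union> wfv w"

definition tfresh :: "nat \<Rightarrow> ('p, 'f, 'w::monoid_mult) judg set \<Rightarrow> ('p, 'f, 'w) judg multiset
    \<Rightarrow> ('p, 'f, 'w) judg \<Rightarrow> bool" where
  "tfresh x G D J \<longleftrightarrow> x \<notin> (\<Union>j\<in>G. tfvj j) \<and> x \<notin> (\<Union>j\<in>set_mset D. tfvj j) \<and> x \<notin> tfvj J"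

definition wfresh :: "nat \<Rightarrow> ('p, 'f, 'w::monoid_mult) judg set \<Rightarrow> ('p, 'f, 'w) judg multiset
    \<Rightarrow> ('p, 'f, 'w) judg \<Rightarrow> bool" where
  "wfresh x G D J \<longleftrightarrow> x \<notin> (\<Union>j\<in>G. wfvj j) \<and> x \<notin> (\<Union>j\<in>set_mset D. wfvj j) \<and> x \<notin> wfvj J"

text \<open>The cut-free HyLL sequent calculus: seq G D J means G ; D => J is derivable.\<close>
inductive seq :: "('p, 'f, 'w::monoid_mult) judg set \<Rightarrow> ('p, 'f, 'w) judg multiset
    \<Rightarrow> ('p, 'f, 'w) judg \<Rightarrow> bool" where
  init: "seq G {# Jdg (Atm p ts) u #} (Jdg (Atm p ts) u)"
| copy: "Jdg A u \<in> G \<Longrightarrow> seq G (D + {# Jdg A u #}) J \<Longrightarrow> seq G D J"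
| tensorR: "seq G D (Jdg A w) \<Longrightarrow> seq G D' (Jdg B w) \<Longrightarrow> seq G (D + D') (Jdg (Tensor A B) w)"
| tensorL: "seq G (D + {# Jdg A u, Jdg B u #}) J \<Longrightarrow> seq G (D + {# Jdg (Tensor A B) u #}) J"
| oneR: "seq G {#} (Jdg One w)"
| oneL: "seq G D J \<Longrightarrow> seq G (D + {# Jdg One u #}) J"
| lolliR: "seq G (D + {# Jdg A w #}) (Jdg B w) \<Longrightarrow> seq G D (Jdg (Lolli A B) w)"
| lolliL: "seq G D (Jdg A u) \<Longrightarrow> seq G (D' + {# Jdg B u #}) J
           \<Longrightarrow> seq G (D + D' + {# Jdg (Lolli A B) u #}) J"
| topR: "seq G D (Jdg Top w)"
| zeroL: "seq G (D + {# Jdg Zero u #}) J"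
| withR: "seq G D (Jdg A w) \<Longrightarrow> seq G D (Jdg B w) \<Longrightarrow> seq G D (Jdg (With A B) w)"
| withL1: "seq G (D + {# Jdg A u #}) J \<Longrightarrow> seq G (D + {# Jdg (With A B) u #}) J"
| withL2: "seq G (D + {# Jdg B u #}) J \<Longrightarrow> seq G (D + {# Jdg (With A B) u #}) J"
| plusR1: "seq G D (Jdg A w) \<Longrightarrow> seq G D (Jdg (Plus A B) w)"
| plusR2: "seq G D (Jdg B w) \<Longrightarrow> seq G D (Jdg (Plus A B) w)"
| plusL: "seq G (D + {# Jdg A u #}) J \<Longrightarrow> seq G (D + {# Jdg B u #}) J
          \<Longrightarrow> seq G (D + {# Jdg (Plus A B) u #}) J"
| allTR: "tfresh x G D (Jdg (AllT A) w) \<Longrightarrow> seq G D (Jdg (topen 0 (TFree x) A) w)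
          \<Longrightarrow> seq G D (Jdg (AllT A) w)"
| allTL: "is_term t \<Longrightarrow> seq G (D + {# Jdg (topen 0 t A) u #}) J
          \<Longrightarrow> seq G (D + {# Jdg (AllT A) u #}) J"
| exTR: "is_term t \<Longrightarrow> seq G D (Jdg (topen 0 t A) w) \<Longrightarrow> seq G D (Jdg (ExT A) w)"
| exTL: "tfresh x G (D + {# Jdg (ExT A) u #}) J \<Longrightarrow> seq G (D + {# Jdg (topen 0 (TFree x) A) u #}) J
          \<Longrightarrow> seq G (D + {# Jdg (ExT A) u #}) J"
| allWR: "wfresh x G D (Jdg (AllW A) w) \<Longrightarrow> seq G D (Jdg (wopenp 0 (wvar x) A) w)
          \<Longrightarrow> seq G D (Jdg (AllW A) w)"
| allWL: "is_world v \<Longrightarrow> seq G (D + {# Jdg (wopenp 0 v A) u #}) J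
          \<Longrightarrow> seq G (D + {# Jdg (AllW A) u #}) J"
| exWR: "is_world v \<Longrightarrow> seq G D (Jdg (wopenp 0 v A) w) \<Longrightarrow> seq G D (Jdg (ExW A) w)"
| exWL: "wfresh x G (D + {# Jdg (ExW A) u #}) J \<Longrightarrow> seq G (D + {# Jdg (wopenp 0 (wvar x) A) u #}) J
          \<Longrightarrow> seq G (D + {# Jdg (ExW A) u #}) J"
| bangR: "seq G {#} (Jdg A w) \<Longrightarrow> seq G {#} (Jdg (Bang A) w)"
| bangL: "seq (insert (Jdg A u) G) D J \<Longrightarrow> seq G (D + {# Jdg (Bang A) u #}) J"
| atR: "seq G D (Jdg A u) \<Longrightarrow> seq G D (Jdg (AtW A u) v)"
| atL: "seq G (D + {# Jdg A u #}) J \<Longrightarrow> seq G (D + {# Jdg (AtW A u) v #}) J"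
| downR: "seq G D (Jdg (wopenp 0 w A) w) \<Longrightarrow> seq G D (Jdg (Down A) w)"
| downL: "seq G (D + {# Jdg (wopenp 0 v A) v #}) J \<Longrightarrow> seq G (D + {# Jdg (Down A) v #}) J"

end

theory Submission
  imports Defs
begin


primrec tsubst_trm :: "nat \<Rightarrow> 'f trm \<Rightarrow> 'f trm \<Rightarrow> 'f trm" where
  "tsubst_trm x s (TFree y) = (if y = x then s else TFree y)"
| "tsubst_trm x s (TBnd i) = TBnd i"
| "tsubst_trm x s (TApp f ts) = TApp f (map (tsubst_trm x s) ts)"

primrec tsubstp :: "nat \<Rightarrow> 'f trm \<Rightarrow> ('p, 'f, 'w::monoid_mult) hprop \<Rightarrow> ('p, 'f, 'w) hprop" where
  "tsubstp x s (Atm p ts) = Atm p (map (tsubst_trm x s) ts)"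
| "tsubstp x s (Tensor A B) = Tensor (tsubstp x s A) (tsubstp x s B)"
| "tsubstp x s One = One"
| "tsubstp x s (Lolli A B) = Lolli (tsubstp x s A) (tsubstp x s B)"
| "tsubstp x s (With A B) = With (tsubstp x s A) (tsubstp x s B)"
| "tsubstp x s Top = Top"
| "tsubstp x s (Plus A B) = Plus (tsubstp x s A) (tsubstp x s B)"
| "tsubstp x s Zero = Zero"
| "tsubstp x s (Bang A) = Bang (tsubstp x s A)"
| "tsubstp x s (AllT A) = AllT (tsubstp x s A)"
| "tsubstp x s (ExT A) = ExT (tsubstp x s A)"
| "tsubstp x s (AtW A w) = AtW (tsubstp x s A) w"
| "tsubstp x s (Down A) = Down (tsubstp x s A)"
| "tsubstp x s (AllW A) = AllW (tsubstp x s A)"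
| "tsubstp x s (ExW A) = ExW (tsubstp x s A)"

fun tsubstj :: "nat \<Rightarrow> 'f trm \<Rightarrow> ('p, 'f, 'w::monoid_mult) judg \<Rightarrow> ('p, 'f, 'w) judg" where
  "tsubstj x s (Jdg A w) = Jdg (tsubstp x s A) w"

primrec wsubst_raw :: "nat \<Rightarrow> 'w wexp \<Rightarrow> 'w wexp \<Rightarrow> 'w wexp" where
  "wsubst_raw x s (WElem a) = WElem a"
| "wsubst_raw x s (WFree y) = (if y = x then s else WFree y)"
| "wsubst_raw x s (WBnd i) = WBnd i"
| "wsubst_raw x s (WMul a b) = WMul (wsubst_raw x s a) (wsubst_raw x s b)"

lemma weq_wsubst1: "weq a b \<Longrightarrow> weq (wsubst_raw k s a) (wsubst_raw k s b)"
  by (induction rule: weq.induct) (auto intro: weq.intros)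

lemma weq_wsubst2: "weq s s' \<Longrightarrow> weq (wsubst_raw k s a) (wsubst_raw k s' a)"
  by (induction a) (auto intro: weq.intros)

lift_definition wsubst :: "nat \<Rightarrow> 'w::monoid_mult world \<Rightarrow> 'w world \<Rightarrow> 'w world" is wsubst_raw
  by (meson weq_trans weq_wsubst1 weq_wsubst2)

primrec wsubstp :: "nat \<Rightarrow> 'w world \<Rightarrow> ('p, 'f, 'w::monoid_mult) hprop \<Rightarrow> ('p, 'f, 'w) hprop" where
  "wsubstp x s (Atm p ts) = Atm p ts"
| "wsubstp x s (Tensor A B) = Tensor (wsubstp x s A) (wsubstp x s B)"
| "wsubstp x s One = One"
| "wsubstp x s (Lolli A B) = Lolli (wsubstp x s A) (wsubstp x s B)"
| "wsubstp x s (With A B) = With (wsubstp x s A) (wsubstp x s B)"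
| "wsubstp x s Top = Top"
| "wsubstp x s (Plus A B) = Plus (wsubstp x s A) (wsubstp x s B)"
| "wsubstp x s Zero = Zero"
| "wsubstp x s (Bang A) = Bang (wsubstp x s A)"
| "wsubstp x s (AllT A) = AllT (wsubstp x s A)"
| "wsubstp x s (ExT A) = ExT (wsubstp x s A)"
| "wsubstp x s (AtW A w) = AtW (wsubstp x s A) (wsubst x s w)"
| "wsubstp x s (Down A) = Down (wsubstp x s A)"
| "wsubstp x s (AllW A) = AllW (wsubstp x s A)"
| "wsubstp x s (ExW A) = ExW (wsubstp x s A)"

fun wsubstj :: "nat \<Rightarrow> 'w world \<Rightarrow> ('p, 'f, 'w::monoid_mult) judg \<Rightarrow> ('p, 'f, 'w) judg" where
  "wsubstj x s (Jdg A w) = Jdg (wsubstp x s A) (wsubst x s w)"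

primrec psize :: "('p, 'f, 'w::monoid_mult) hprop \<Rightarrow> nat" where
  "psize (Atm p ts) = 1"
| "psize (Tensor A B) = Suc (psize A + psize B)"
| "psize One = 1"
| "psize (Lolli A B) = Suc (psize A + psize B)"
| "psize (With A B) = Suc (psize A + psize B)"
| "psize Top = 1"
| "psize (Plus A B) = Suc (psize A + psize B)"
| "psize Zero = 1"
| "psize (Bang A) = Suc (psize A)"
| "psize (AllT A) = Suc (psize A)"
| "psize (ExT A) = Suc (psize A)"
| "psize (AtW A w) = Suc (psize A)"
| "psize (Down A) = Suc (psize A)"
| "psize (AllW A) = Suc (psize A)"
| "psize (ExW A) = Suc (psize A)"

lemma psize_topen[simp]: "psize (topen k t A) = psize A"
  by (induction A arbitrary: k) auto

lemma psize_wopenp[simp]: "psize (wopenp k t A) = psize A"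
  by (induction A arbitrary: k) auto

lemma topen_trm_closed: "tbv_trm s = {} \<Longrightarrow> topen_trm k t s = s"
  by (induction s) (auto simp: map_idI)

lemma tsubst_topen_trm:
  "tbv_trm s = {} \<Longrightarrow> tsubst_trm x s (topen_trm k t r) = topen_trm k (tsubst_trm x s t) (tsubst_trm x s r)"
  by (induction r) (auto simp: topen_trm_closed)

lemma tsubst_trm_fresh: "x \<notin> tfv_trm r \<Longrightarrow> tsubst_trm x s r = r"
  by (induction r) (auto simp: map_idI)

lemma tbv_tsubst_trm: "tbv_trm (tsubst_trm x s r) \<subseteq> tbv_trm r \<union> tbv_trm s"
  by (induction r) auto

lemma finite_tfv_trm: "finite (tfv_trm r)"
  by (induction r) auto

lemma tsubst_topen:
  "tbv_trm s = {} \<Longrightarrow> tsubstp x s (topen k t A) = topen k (tsubst_trm x s t) (tsubstp x s A)"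
  by (induction A arbitrary: k) (auto simp: tsubst_topen_trm)

lemma tsubstp_fresh: "x \<notin> tfv A \<Longrightarrow> tsubstp x s A = A"
  by (induction A) (auto simp: tsubst_trm_fresh map_idI)

lemma finite_tfv: "finite (tfv A)"
  by (induction A) (auto simp: finite_tfv_trm)

lemma is_term_tsubst: "is_term s \<Longrightarrow> is_term t \<Longrightarrow> is_term (tsubst_trm x s t)"
  unfolding is_term_def using tbv_tsubst_trm by blast

lemma wopen_raw_closed: "wbv_raw s = {} \<Longrightarrow> wopen_raw k t s = s"
  by (induction s) auto

lemma wsubst_wopen_raw:
  "wbv_raw v = {} \<Longrightarrow> wsubst_raw x v (wopen_raw k s a) = wopen_raw k (wsubst_raw x v s) (wsubst_raw x v a)"
  by (induction a) (auto simp: wopen_raw_closed)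

lemma wsubst_raw_fresh: "x \<notin> wfv_raw a \<Longrightarrow> wsubst_raw x v a = a"
  by (induction a) auto

lemma wbv_wsubst_raw: "wbv_raw (wsubst_raw x v a) \<subseteq> wbv_raw a \<union> wbv_raw v"
  by (induction a) auto

lemma finite_wfv_raw: "finite (wfv_raw a)"
  by (induction a) auto

lemma wsubst_wopen: "wbv v = {} \<Longrightarrow> wsubst x v (wopen k s w) = wopen k (wsubst x v s) (wsubst x v w)"
  by transfer (simp add: wsubst_wopen_raw weq_refl)

lemma wsubst_fresh: "x \<notin> wfv w \<Longrightarrow> wsubst x v w = w"
  by transfer (simp add: wsubst_raw_fresh weq_refl)

lemma wbv_wsubst: "wbv (wsubst x v w) \<subseteq> wbv w \<union> wbv v"
  by transfer (rule wbv_wsubst_raw)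

lemma finite_wfv: "finite (wfv w)"
  by transfer (rule finite_wfv_raw)

lemma wsubst_var_same[simp]: "wsubst x v (wvar x) = v"
  by transfer (simp add: weq_refl)

lemma wsubst_var_other[simp]: "y \<noteq> x \<Longrightarrow> wsubst x v (wvar y) = wvar y"
  by transfer (simp add: weq_refl)

lemma wsubstp_wopenp:
  "wbv v = {} \<Longrightarrow> wsubstp x v (wopenp k s A) = wopenp k (wsubst x v s) (wsubstp x v A)"
  by (induction A arbitrary: k) (auto simp: wsubst_wopen)

lemma wsubstp_fresh: "x \<notin> wfvp A \<Longrightarrow> wsubstp x v A = A"
  by (induction A) (auto simp: wsubst_fresh)

lemma finite_wfvp: "finite (wfvp A)"
  by (induction A) (auto simp: finite_wfv)

lemma is_world_wsubst: "is_world v \<Longrightarrow> is_world w \<Longrightarrow> is_world (wsubst x v w)"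
  unfolding is_world_def using wbv_wsubst by blast

lemma finite_tfvj: "finite (tfvj j)"
  by (cases j) (auto simp: finite_tfv)

lemma finite_wfvj: "finite (wfvj j)"
  by (cases j) (auto simp: finite_wfvp finite_wfv)

lemma tsubstj_fresh: "x \<notin> tfvj j \<Longrightarrow> tsubstj x s j = j"
  by (cases j) (auto simp: tsubstp_fresh)

lemma wsubstj_fresh: "x \<notin> wfvj j \<Longrightarrow> wsubstj x s j = j"
  by (cases j) (auto simp: wsubstp_fresh wsubst_fresh)

lemma tsubst_set_fresh: "x \<notin> (\<Union>j\<in>G. tfvj j) \<Longrightarrow> tsubstj x s ` G = G"
  by (auto simp: tsubstj_fresh image_iff)

lemma wsubst_set_fresh: "x \<notin> (\<Union>j\<in>G. wfvj j) \<Longrightarrow> wsubstj x s ` G = G"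
  by (auto simp: wsubstj_fresh image_iff)

lemma tsubst_mset_fresh: "x \<notin> (\<Union>j\<in>set_mset D. tfvj j) \<Longrightarrow> image_mset (tsubstj x s) D = D"
  by (induction D) (auto simp: tsubstj_fresh)

lemma wsubst_mset_fresh: "x \<notin> (\<Union>j\<in>set_mset D. wfvj j) \<Longrightarrow> image_mset (wsubstj x s) D = D"
  by (induction D) (auto simp: wsubstj_fresh)

lemma fresh_nat: "finite (S::nat set) \<Longrightarrow> \<exists>x. x \<notin> S"
  using infinite_UNIV_nat ex_new_if_finite by blast



inductive seqc :: "('p, 'f, 'w::monoid_mult) judg set \<Rightarrow> ('p, 'f, 'w) judg multiset
    \<Rightarrow> ('p, 'f, 'w) judg \<Rightarrow> bool" where
  c_init: "seqc G {# Jdg (Atm p ts) u #} (Jdg (Atm p ts) u)"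
| c_copy: "Jdg A u \<in> G \<Longrightarrow> seqc G (add_mset (Jdg A u) D) J \<Longrightarrow> seqc G D J"
| c_tensorR: "seqc G D (Jdg A w) \<Longrightarrow> seqc G D' (Jdg B w) \<Longrightarrow> seqc G (D + D') (Jdg (Tensor A B) w)"
| c_tensorL: "seqc G (add_mset (Jdg A u) (add_mset (Jdg B u) D)) J \<Longrightarrow> seqc G (add_mset (Jdg (Tensor A B) u) D) J"
| c_oneR: "seqc G {#} (Jdg One w)"
| c_oneL: "seqc G D J \<Longrightarrow> seqc G (add_mset (Jdg One u) D) J"
| c_lolliR: "seqc G (add_mset (Jdg A w) D) (Jdg B w) \<Longrightarrow> seqc G D (Jdg (Lolli A B) w)"
| c_lolliL: "seqc G D (Jdg A u) \<Longrightarrow> seqc G (add_mset (Jdg B u) D') J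
           \<Longrightarrow> seqc G (add_mset (Jdg (Lolli A B) u) (D + D')) J"
| c_topR: "seqc G D (Jdg Top w)"
| c_zeroL: "seqc G (add_mset (Jdg Zero u) D) J"
| c_withR: "seqc G D (Jdg A w) \<Longrightarrow> seqc G D (Jdg B w) \<Longrightarrow> seqc G D (Jdg (With A B) w)"
| c_withL1: "seqc G (add_mset (Jdg A u) D) J \<Longrightarrow> seqc G (add_mset (Jdg (With A B) u) D) J"
| c_withL2: "seqc G (add_mset (Jdg B u) D) J \<Longrightarrow> seqc G (add_mset (Jdg (With A B) u) D) J"
| c_plusR1: "seqc G D (Jdg A w) \<Longrightarrow> seqc G D (Jdg (Plus A B) w)"
| c_plusR2: "seqc G D (Jdg B w) \<Longrightarrow> seqc G D (Jdg (Plus A B) w)"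
| c_plusL: "seqc G (add_mset (Jdg A u) D) J \<Longrightarrow> seqc G (add_mset (Jdg B u) D) J
          \<Longrightarrow> seqc G (add_mset (Jdg (Plus A B) u) D) J"
| c_allTR: "finite L \<Longrightarrow> (\<And>x. x \<notin> L \<Longrightarrow> seqc G D (Jdg (topen 0 (TFree x) A) w))
          \<Longrightarrow> seqc G D (Jdg (AllT A) w)"
| c_allTL: "is_term t \<Longrightarrow> seqc G (add_mset (Jdg (topen 0 t A) u) D) J
          \<Longrightarrow> seqc G (add_mset (Jdg (AllT A) u) D) J"
| c_exTR: "is_term t \<Longrightarrow> seqc G D (Jdg (topen 0 t A) w) \<Longrightarrow> seqc G D (Jdg (ExT A) w)"
| c_exTL: "finite L \<Longrightarrow> (\<And>x. x \<notin> L \<Longrightarrow> seqc G (add_mset (Jdg (topen 0 (TFree x) A) u) D) J)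
          \<Longrightarrow> seqc G (add_mset (Jdg (ExT A) u) D) J"
| c_allWR: "finite L \<Longrightarrow> (\<And>x. x \<notin> L \<Longrightarrow> seqc G D (Jdg (wopenp 0 (wvar x) A) w))
          \<Longrightarrow> seqc G D (Jdg (AllW A) w)"
| c_allWL: "is_world v \<Longrightarrow> seqc G (add_mset (Jdg (wopenp 0 v A) u) D) J
          \<Longrightarrow> seqc G (add_mset (Jdg (AllW A) u) D) J"
| c_exWR: "is_world v \<Longrightarrow> seqc G D (Jdg (wopenp 0 v A) w) \<Longrightarrow> seqc G D (Jdg (ExW A) w)"
| c_exWL: "finite L \<Longrightarrow> (\<And>x. x \<notin> L \<Longrightarrow> seqc G (add_mset (Jdg (wopenp 0 (wvar x) A) u) D) J)
          \<Longrightarrow> seqc G (add_mset (Jdg (ExW A) u) D) J"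
| c_bangR: "seqc G {#} (Jdg A w) \<Longrightarrow> seqc G {#} (Jdg (Bang A) w)"
| c_bangL: "seqc (insert (Jdg A u) G) D J \<Longrightarrow> seqc G (add_mset (Jdg (Bang A) u) D) J"
| c_atR: "seqc G D (Jdg A u) \<Longrightarrow> seqc G D (Jdg (AtW A u) v)"
| c_atL: "seqc G (add_mset (Jdg A u) D) J \<Longrightarrow> seqc G (add_mset (Jdg (AtW A u) v) D) J"
| c_downR: "seqc G D (Jdg (wopenp 0 w A) w) \<Longrightarrow> seqc G D (Jdg (Down A) w)"
| c_downL: "seqc G (add_mset (Jdg (wopenp 0 v A) v) D) J \<Longrightarrow> seqc G (add_mset (Jdg (Down A) v) D) J"

lemmas seqc_nc = seqc.intros(1) seqc.intros(3-30)



lemma seqc_weaken: "seqc G D J \<Longrightarrow> G \<subseteq> G' \<Longrightarrow> seqc G' D J"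
proof (induction arbitrary: G' rule: seqc.induct)
  case c_init show ?case by (rule seqc.c_init)
next
  case (c_copy A u G D J)
  show ?case apply (rule seqc.c_copy[of A u]) using c_copy by auto
next
  case c_tensorR show ?case apply (rule seqc.c_tensorR) using c_tensorR by auto
next
  case c_tensorL show ?case apply (rule seqc.c_tensorL) using c_tensorL by auto
next
  case c_oneR show ?case by (rule seqc.c_oneR)
next
  case c_oneL show ?case apply (rule seqc.c_oneL) using c_oneL by auto
next
  case c_lolliR show ?case apply (rule seqc.c_lolliR) using c_lolliR by auto
next
  case c_lolliL show ?case apply (rule seqc.c_lolliL) using c_lolliL by auto
next
  case c_topR show ?case by (rule seqc.c_topR)
next
  case c_zeroL show ?case by (rule seqc.c_zeroL)
next
  case c_withR show ?case apply (rule seqc.c_withR) using c_withR by auto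
next
  case c_withL1 show ?case apply (rule seqc.c_withL1) using c_withL1 by auto
next
  case c_withL2 show ?case apply (rule seqc.c_withL2) using c_withL2 by auto
next
  case c_plusR1 show ?case apply (rule seqc.c_plusR1) using c_plusR1 by auto
next
  case c_plusR2 show ?case apply (rule seqc.c_plusR2) using c_plusR2 by auto
next
  case c_plusL show ?case apply (rule seqc.c_plusL) using c_plusL by auto
next
  case (c_allTR L G D A w) show ?case apply (rule seqc.c_allTR[of L]) using c_allTR by auto
next
  case c_allTL show ?case apply (rule seqc.c_allTL) using c_allTL by auto
next
  case c_exTR show ?case apply (rule seqc.c_exTR) using c_exTR by auto
next
  case (c_exTL L G A u D J) show ?case apply (rule seqc.c_exTL[of L]) using c_exTL by auto
next
  case (c_allWR L G D A w) show ?case apply (rule seqc.c_allWR[of L]) using c_allWR by auto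
next
  case c_allWL show ?case apply (rule seqc.c_allWL) using c_allWL by auto
next
  case c_exWR show ?case apply (rule seqc.c_exWR) using c_exWR by auto
next
  case (c_exWL L G A u D J) show ?case apply (rule seqc.c_exWL[of L]) using c_exWL by auto
next
  case c_bangR show ?case apply (rule seqc.c_bangR) using c_bangR by auto
next
  case (c_bangL A u G D J)
  show ?case apply (rule seqc.c_bangL) using c_bangL by blast
next
  case c_atR show ?case apply (rule seqc.c_atR) using c_atR by auto
next
  case c_atL show ?case apply (rule seqc.c_atL) using c_atL by auto
next
  case c_downR show ?case apply (rule seqc.c_downR) using c_downR by auto
next
  case c_downL show ?case apply (rule seqc.c_downL) using c_downL by auto
qed

lemma wsubstp_topen[simp]: "wsubstp z s (topen k t A) = topen k t (wsubstp z s A)"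
  by (induction A arbitrary: k) auto

lemma tsubstp_wopenp[simp]: "tsubstp z s (wopenp k t A) = wopenp k t (tsubstp z s A)"
  by (induction A arbitrary: k) auto

lemma seqc_tsubst:
  "seqc G D J \<Longrightarrow> is_term s \<Longrightarrow> seqc (tsubstj z s ` G) (image_mset (tsubstj z s) D) (tsubstj z s J)"
proof (induction rule: seqc.induct)
  case c_init show ?case by (simp add: seqc.c_init)
next
  case (c_copy A u G D J)
  show ?case apply (rule seqc.c_copy[of "tsubstp z s A" u]) using c_copy by (auto intro: rev_image_eqI)
next
  case c_tensorR show ?case apply simp apply (rule seqc.c_tensorR) using c_tensorR by auto
next
  case c_tensorL show ?case apply simp apply (rule seqc.c_tensorL) using c_tensorL by auto
next
  case c_oneR show ?case by (simp add: seqc.c_oneR)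
next
  case c_oneL show ?case apply simp apply (rule seqc.c_oneL) using c_oneL by auto
next
  case c_lolliR show ?case apply simp apply (rule seqc.c_lolliR) using c_lolliR by auto
next
  case c_lolliL show ?case apply simp apply (rule seqc.c_lolliL) using c_lolliL by auto
next
  case c_topR show ?case by (simp add: seqc.c_topR)
next
  case c_zeroL show ?case by (simp add: seqc.c_zeroL)
next
  case c_withR show ?case apply simp apply (rule seqc.c_withR) using c_withR by auto
next
  case c_withL1 show ?case apply simp apply (rule seqc.c_withL1) using c_withL1 by auto
next
  case c_withL2 show ?case apply simp apply (rule seqc.c_withL2) using c_withL2 by auto
next
  case c_plusR1 show ?case apply simp apply (rule seqc.c_plusR1) using c_plusR1 by auto
next
  case c_plusR2 show ?case apply simp apply (rule seqc.c_plusR2) using c_plusR2 by auto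
next
  case c_plusL show ?case apply simp apply (rule seqc.c_plusL) using c_plusL by auto
next
  case (c_allTR L G D A w)
  have cl: "tbv_trm s = {}" using c_allTR.prems by (simp add: is_term_def)
  show ?case apply simp apply (rule seqc.c_allTR[of "insert z L"]) using c_allTR apply simp
    subgoal for x using c_allTR.IH[of x] c_allTR.prems cl by (auto simp: tsubst_topen is_term_tsubst) done
next
  case (c_allTL t G A u D J)
  have cl: "tbv_trm s = {}" using c_allTL.prems by (simp add: is_term_def)
  show ?case apply simp apply (rule seqc.c_allTL[of "tsubst_trm z s t"]) using c_allTL cl by (auto simp: tsubst_topen is_term_tsubst)
next
  case (c_exTR t G D A w)
  have cl: "tbv_trm s = {}" using c_exTR.prems by (simp add: is_term_def)
  show ?case apply simp apply (rule seqc.c_exTR[of "tsubst_trm z s t"]) using c_exTR cl by (auto simp: tsubst_topen is_term_tsubst)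
next
  case (c_exTL L G A u D J)
  have cl: "tbv_trm s = {}" using c_exTL.prems by (simp add: is_term_def)
  show ?case apply simp apply (rule seqc.c_exTL[of "insert z L"]) using c_exTL apply simp
    subgoal for x using c_exTL.IH[of x] c_exTL.prems cl by (auto simp: tsubst_topen is_term_tsubst) done
next
  case c_allWR show ?case apply simp apply (rule seqc.c_allWR) using c_allWR by auto
next
  case c_allWL show ?case apply simp apply (rule seqc.c_allWL) using c_allWL by auto
next
  case c_exWR show ?case apply simp apply (rule seqc.c_exWR) using c_exWR by auto
next
  case c_exWL show ?case apply simp apply (rule seqc.c_exWL) using c_exWL by auto
next
  case c_bangR show ?case apply simp apply (rule seqc.c_bangR) using c_bangR by auto
next
  case c_bangL show ?case apply simp apply (rule seqc.c_bangL) using c_bangL by auto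
next
  case c_atR show ?case apply simp apply (rule seqc.c_atR) using c_atR by auto
next
  case c_atL show ?case apply simp apply (rule seqc.c_atL) using c_atL by auto
next
  case c_downR show ?case apply simp apply (rule seqc.c_downR) using c_downR by auto
next
  case c_downL show ?case apply simp apply (rule seqc.c_downL) using c_downL by auto
qed

lemma seqc_wsubst:
  "seqc G D J \<Longrightarrow> is_world s \<Longrightarrow> seqc (wsubstj z s ` G) (image_mset (wsubstj z s) D) (wsubstj z s J)"
proof (induction rule: seqc.induct)
  case c_init show ?case by (simp add: seqc.c_init)
next
  case (c_copy A u G D J)
  show ?case apply (rule seqc.c_copy[of "wsubstp z s A" "wsubst z s u"]) using c_copy by force+
next
  case c_tensorR show ?case apply simp apply (rule seqc.c_tensorR) using c_tensorR by auto
next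
  case c_tensorL show ?case apply simp apply (rule seqc.c_tensorL) using c_tensorL by auto
next
  case c_oneR show ?case by (simp add: seqc.c_oneR)
next
  case c_oneL show ?case apply simp apply (rule seqc.c_oneL) using c_oneL by auto
next
  case c_lolliR show ?case apply simp apply (rule seqc.c_lolliR) using c_lolliR by auto
next
  case c_lolliL show ?case apply simp apply (rule seqc.c_lolliL) using c_lolliL by auto
next
  case c_topR show ?case by (simp add: seqc.c_topR)
next
  case c_zeroL show ?case by (simp add: seqc.c_zeroL)
next
  case c_withR show ?case apply simp apply (rule seqc.c_withR) using c_withR by auto
next
  case c_withL1 show ?case apply simp apply (rule seqc.c_withL1) using c_withL1 by auto
next
  case c_withL2 show ?case apply simp apply (rule seqc.c_withL2) using c_withL2 by auto
next
  case c_plusR1 show ?case apply simp apply (rule seqc.c_plusR1) using c_plusR1 by auto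
next
  case c_plusR2 show ?case apply simp apply (rule seqc.c_plusR2) using c_plusR2 by auto
next
  case c_plusL show ?case apply simp apply (rule seqc.c_plusL) using c_plusL by auto
next
  case c_allTR show ?case apply simp apply (rule seqc.c_allTR) using c_allTR by auto
next
  case c_allTL show ?case apply simp apply (rule seqc.c_allTL) using c_allTL by auto
next
  case c_exTR show ?case apply simp apply (rule seqc.c_exTR) using c_exTR by auto
next
  case c_exTL show ?case apply simp apply (rule seqc.c_exTL) using c_exTL by auto
next
  case (c_allWR L G D A w)
  have cl: "wbv s = {}" using c_allWR.prems by (simp add: is_world_def)
  show ?case apply simp apply (rule seqc.c_allWR[of "insert z L"]) using c_allWR apply simp
    subgoal for x using c_allWR.IH[of x] c_allWR.prems cl by (auto simp: wsubstp_wopenp is_world_wsubst) done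
next
  case (c_allWL v G A u D J)
  have cl: "wbv s = {}" using c_allWL.prems by (simp add: is_world_def)
  show ?case apply simp apply (rule seqc.c_allWL[of "wsubst z s v"]) using c_allWL cl by (auto simp: wsubstp_wopenp is_world_wsubst)
next
  case (c_exWR v G D A w)
  have cl: "wbv s = {}" using c_exWR.prems by (simp add: is_world_def)
  show ?case apply simp apply (rule seqc.c_exWR[of "wsubst z s v"]) using c_exWR cl by (auto simp: wsubstp_wopenp is_world_wsubst)
next
  case (c_exWL L G A u D J)
  have cl: "wbv s = {}" using c_exWL.prems by (simp add: is_world_def)
  show ?case apply simp apply (rule seqc.c_exWL[of "insert z L"]) using c_exWL apply simp
    subgoal for x using c_exWL.IH[of x] c_exWL.prems cl by (auto simp: wsubstp_wopenp is_world_wsubst) done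
next
  case c_bangR show ?case apply simp apply (rule seqc.c_bangR) using c_bangR by auto
next
  case c_bangL show ?case apply simp apply (rule seqc.c_bangL) using c_bangL by auto
next
  case c_atR show ?case apply simp apply (rule seqc.c_atR) using c_atR by auto
next
  case c_atL show ?case apply simp apply (rule seqc.c_atL) using c_atL by auto
next
  case (c_downR G D w A)
  have cl: "wbv s = {}" using c_downR.prems by (simp add: is_world_def)
  show ?case apply simp apply (rule seqc.c_downR) using c_downR cl by (auto simp: wsubstp_wopenp is_world_wsubst)
next
  case (c_downL G v A D J)
  have cl: "wbv s = {}" using c_downL.prems by (simp add: is_world_def)
  show ?case apply simp apply (rule seqc.c_downL) using c_downL cl by (auto simp: wsubstp_wopenp is_world_wsubst)
qed

lemmas s_init = seq.init[simplified]
lemmas s_copy = seq.copy[simplified]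
lemmas s_tensorR = seq.tensorR[simplified]
lemmas s_tensorL = seq.tensorL[simplified]
lemmas s_oneR = seq.oneR[simplified]
lemmas s_oneL = seq.oneL[simplified]
lemmas s_lolliR = seq.lolliR[simplified]
lemmas s_lolliL = seq.lolliL[simplified]
lemmas s_topR = seq.topR[simplified]
lemmas s_zeroL = seq.zeroL[simplified]
lemmas s_withR = seq.withR[simplified]
lemmas s_withL1 = seq.withL1[simplified]
lemmas s_withL2 = seq.withL2[simplified]
lemmas s_plusR1 = seq.plusR1[simplified]
lemmas s_plusR2 = seq.plusR2[simplified]
lemmas s_plusL = seq.plusL[simplified]
lemmas s_allTR = seq.allTR[simplified]
lemmas s_allTL = seq.allTL[simplified]
lemmas s_exTR = seq.exTR[simplified]
lemmas s_exTL = seq.exTL[simplified]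
lemmas s_allWR = seq.allWR[simplified]
lemmas s_allWL = seq.allWL[simplified]
lemmas s_exWR = seq.exWR[simplified]
lemmas s_exWL = seq.exWL[simplified]
lemmas s_bangR = seq.bangR[simplified]
lemmas s_bangL = seq.bangL[simplified]
lemmas s_atR = seq.atR[simplified]
lemmas s_atL = seq.atL[simplified]
lemmas s_downR = seq.downR[simplified]
lemmas s_downL = seq.downL[simplified]

lemma fin_fv_G: "finite G \<Longrightarrow> finite (\<Union>j\<in>G. tfvj j)" "finite G \<Longrightarrow> finite (\<Union>j\<in>G. wfvj j)"
  by (auto simp: finite_tfvj finite_wfvj)

lemma fin_fv_D: "finite (\<Union>j\<in>set_mset D. tfvj j)" "finite (\<Union>j\<in>set_mset D. wfvj j)"
  by (auto simp: finite_tfvj finite_wfvj)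

lemma instR_T:
  assumes "finite G" "finite L" "\<And>x. x \<notin> L \<Longrightarrow> seqc G D (Jdg (topen 0 (TFree x) A) w)" "is_term t"
  shows "seqc G D (Jdg (topen 0 t A) w)"
proof -
  have fin: "finite (L \<union> (\<Union>j\<in>G. tfvj j) \<union> (\<Union>j\<in>set_mset D. tfvj j) \<union> tfv A)" using assms(1,2) by (simp add: finite_tfvj finite_wfvj fin_fv_G fin_fv_D finite_tfv)
  then obtain x where x: "x \<notin> L \<union> (\<Union>j\<in>G. tfvj j) \<union> (\<Union>j\<in>set_mset D. tfvj j) \<union> tfv A" using fresh_nat by presburger
  have "seqc (tsubstj x t ` G) (image_mset (tsubstj x t) D) (tsubstj x t (Jdg (topen 0 (TFree x) A) w))"
    using seqc_tsubst[OF assms(3)[of x] assms(4), of x] x by blast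
  moreover have "tsubstj x t ` G = G" using x by (intro tsubst_set_fresh) blast
  moreover have "image_mset (tsubstj x t) D = D" using x by (intro tsubst_mset_fresh) blast
  ultimately show ?thesis using x assms(4) by (simp add: tsubst_topen is_term_def tsubstp_fresh)
qed

lemma instL_T:
  assumes "finite G" "finite L" "\<And>x. x \<notin> L \<Longrightarrow> seqc G (add_mset (Jdg (topen 0 (TFree x) A) u) D) J" "is_term t"
  shows "seqc G (add_mset (Jdg (topen 0 t A) u) D) J"
proof -
  have fin: "finite (L \<union> (\<Union>j\<in>G. tfvj j) \<union> (\<Union>j\<in>set_mset D. tfvj j) \<union> tfv A \<union> tfvj J)" using assms(1,2) by (simp add: finite_tfvj finite_wfvj fin_fv_G fin_fv_D finite_tfv finite_tfvj)
  then obtain x where x: "x \<notin> L \<union> (\<Union>j\<in>G. tfvj j) \<union> (\<Union>j\<in>set_mset D. tfvj j) \<union> tfv A \<union> tfvj J" using fresh_nat by presburger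
  have "seqc (tsubstj x t ` G) (image_mset (tsubstj x t) (add_mset (Jdg (topen 0 (TFree x) A) u) D)) (tsubstj x t J)"
    using seqc_tsubst[OF assms(3)[of x] assms(4), of x] x by blast
  moreover have "tsubstj x t ` G = G" using x by (intro tsubst_set_fresh) blast
  moreover have "image_mset (tsubstj x t) D = D" using x by (intro tsubst_mset_fresh) blast
  moreover have "tsubstj x t J = J" using x by (intro tsubstj_fresh) blast
  ultimately show ?thesis using x assms(4) by (simp add: tsubst_topen is_term_def tsubstp_fresh)
qed

lemma instR_W:
  assumes "finite G" "finite L" "\<And>x. x \<notin> L \<Longrightarrow> seqc G D (Jdg (wopenp 0 (wvar x) A) w)" "is_world v"
  shows "seqc G D (Jdg (wopenp 0 v A) w)"
proof -
  have fin: "finite (L \<union> (\<Union>j\<in>G. wfvj j) \<union> (\<Union>j\<in>set_mset D. wfvj j) \<union> wfvp A \<union> wfv w)" using assms(1,2) by (simp add: finite_tfvj finite_wfvj fin_fv_G fin_fv_D finite_wfvp finite_wfv)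
  then obtain x where x: "x \<notin> L \<union> (\<Union>j\<in>G. wfvj j) \<union> (\<Union>j\<in>set_mset D. wfvj j) \<union> wfvp A \<union> wfv w" using fresh_nat by presburger
  have "seqc (wsubstj x v ` G) (image_mset (wsubstj x v) D) (wsubstj x v (Jdg (wopenp 0 (wvar x) A) w))"
    using seqc_wsubst[OF assms(3)[of x] assms(4), of x] x by blast
  moreover have "wsubstj x v ` G = G" using x by (intro wsubst_set_fresh) blast
  moreover have "image_mset (wsubstj x v) D = D" using x by (intro wsubst_mset_fresh) blast
  ultimately show ?thesis using x assms(4) by (simp add: wsubstp_wopenp is_world_def wsubstp_fresh wsubst_fresh)
qed

lemma instL_W:
  assumes "finite G" "finite L" "\<And>x. x \<notin> L \<Longrightarrow> seqc G (add_mset (Jdg (wopenp 0 (wvar x) A) u) D) J" "is_world v"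
  shows "seqc G (add_mset (Jdg (wopenp 0 v A) u) D) J"
proof -
  have fin: "finite (L \<union> (\<Union>j\<in>G. wfvj j) \<union> (\<Union>j\<in>set_mset D. wfvj j) \<union> wfvp A \<union> wfv u \<union> wfvj J)" using assms(1,2) by (simp add: finite_tfvj finite_wfvj fin_fv_G fin_fv_D finite_wfvp finite_wfv finite_wfvj)
  then obtain x where x: "x \<notin> L \<union> (\<Union>j\<in>G. wfvj j) \<union> (\<Union>j\<in>set_mset D. wfvj j) \<union> wfvp A \<union> wfv u \<union> wfvj J" using fresh_nat by presburger
  have "seqc (wsubstj x v ` G) (image_mset (wsubstj x v) (add_mset (Jdg (wopenp 0 (wvar x) A) u) D)) (wsubstj x v J)"
    using seqc_wsubst[OF assms(3)[of x] assms(4), of x] x by blast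
  moreover have "wsubstj x v ` G = G" using x by (intro wsubst_set_fresh) blast
  moreover have "image_mset (wsubstj x v) D = D" using x by (intro wsubst_mset_fresh) blast
  moreover have "wsubstj x v J = J" using x by (intro wsubstj_fresh) blast
  ultimately show ?thesis using x assms(4) by (simp add: wsubstp_wopenp is_world_def wsubstp_fresh wsubst_fresh)
qed
lemma wbv_wvar[simp]: "wbv (wvar y) = {}"
  by transfer simp

lemma seq_seqc: "seq G D J \<Longrightarrow> seqc G D J"
proof (induction rule: seq.induct)
  case init show ?case by (simp add: seqc.c_init)
next
  case (copy A u G D J) show ?case apply (rule seqc.c_copy[of A u]) using copy by auto
next
  case tensorR show ?case apply (simp)? apply (rule seqc.c_tensorR) using tensorR by auto
next
  case tensorL show ?case apply (simp)? apply (rule seqc.c_tensorL) using tensorL by auto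
next
  case oneR show ?case by (simp add: seqc.c_oneR)
next
  case oneL show ?case apply (simp)? apply (rule seqc.c_oneL) using oneL by auto
next
  case lolliR show ?case apply (simp)? apply (rule seqc.c_lolliR) using lolliR by auto
next
  case lolliL show ?case apply (simp)? apply (rule seqc.c_lolliL) using lolliL by auto
next
  case topR show ?case by (simp add: seqc.c_topR)
next
  case zeroL show ?case by (simp add: seqc.c_zeroL)
next
  case withR show ?case apply (simp)? apply (rule seqc.c_withR) using withR by auto
next
  case withL1 show ?case apply (simp)? apply (rule seqc.c_withL1) using withL1 by auto
next
  case withL2 show ?case apply (simp)? apply (rule seqc.c_withL2) using withL2 by auto
next
  case plusR1 show ?case apply (simp)? apply (rule seqc.c_plusR1) using plusR1 by auto
next
  case plusR2 show ?case apply (simp)? apply (rule seqc.c_plusR2) using plusR2 by auto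
next
  case plusL show ?case apply (simp)? apply (rule seqc.c_plusL) using plusL by auto
next
  case (allTR x G D A w)
  have "seqc G D (Jdg (topen 0 (TFree y) A) w)" for y
  proof -
    have "seqc (tsubstj x (TFree y) ` G) (image_mset (tsubstj x (TFree y)) D) (tsubstj x (TFree y) (Jdg (topen 0 (TFree x) A) w))"
      using seqc_tsubst[OF allTR.IH] by (simp add: is_term_def)
    moreover have "tsubstj x (TFree y) ` G = G" using allTR.hyps(1) by (intro tsubst_set_fresh) (simp add: tfresh_def)
    moreover have "image_mset (tsubstj x (TFree y)) D = D" using allTR.hyps(1) by (intro tsubst_mset_fresh) (simp add: tfresh_def)
    ultimately show ?thesis using allTR.hyps(1) by (simp add: tsubst_topen tfresh_def tsubstp_fresh)
  qed
  then show ?case by (intro seqc.c_allTR[of "{}"]) auto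
next
  case allTL show ?case apply (simp)? apply (rule seqc.c_allTL) using allTL by auto
next
  case exTR show ?case apply (simp)? apply (rule seqc.c_exTR) using exTR by auto
next
  case (exTL x G D A u J)
  have "seqc G (add_mset (Jdg (topen 0 (TFree y) A) u) D) J" for y
  proof -
    have "seqc (tsubstj x (TFree y) ` G) (image_mset (tsubstj x (TFree y)) (add_mset (Jdg (topen 0 (TFree x) A) u) D)) (tsubstj x (TFree y) J)"
      using seqc_tsubst[OF exTL.IH] by (simp add: is_term_def)
    moreover have "tsubstj x (TFree y) ` G = G" using exTL.hyps(1) by (intro tsubst_set_fresh) (simp add: tfresh_def)
    moreover have "image_mset (tsubstj x (TFree y)) D = D" using exTL.hyps(1) by (intro tsubst_mset_fresh) (simp add: tfresh_def)
    moreover have "tsubstj x (TFree y) J = J" using exTL.hyps(1) by (intro tsubstj_fresh) (simp add: tfresh_def)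
    ultimately show ?thesis using exTL.hyps(1) by (simp add: tsubst_topen tfresh_def tsubstp_fresh)
  qed
  then show ?case by (simp add: seqc.c_exTL[of "{}"])
next
  case (allWR x G D A w)
  have "seqc G D (Jdg (wopenp 0 (wvar y) A) w)" for y
  proof -
    have "seqc (wsubstj x (wvar y) ` G) (image_mset (wsubstj x (wvar y)) D) (wsubstj x (wvar y) (Jdg (wopenp 0 (wvar x) A) w))"
      using seqc_wsubst[OF allWR.IH] by (simp add: is_world_def)
    moreover have "wsubstj x (wvar y) ` G = G" using allWR.hyps(1) by (intro wsubst_set_fresh) (simp add: wfresh_def)
    moreover have "image_mset (wsubstj x (wvar y)) D = D" using allWR.hyps(1) by (intro wsubst_mset_fresh) (simp add: wfresh_def)
    ultimately show ?thesis using allWR.hyps(1)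
      by (simp add: wsubstp_wopenp wfresh_def wsubstp_fresh wsubst_fresh)
  qed
  then show ?case by (intro seqc.c_allWR[of "{}"]) auto
next
  case allWL show ?case apply (simp)? apply (rule seqc.c_allWL) using allWL by auto
next
  case exWR show ?case apply (simp)? apply (rule seqc.c_exWR) using exWR by auto
next
  case (exWL x G D A u J)
  have "seqc G (add_mset (Jdg (wopenp 0 (wvar y) A) u) D) J" for y
  proof -
    have "seqc (wsubstj x (wvar y) ` G) (image_mset (wsubstj x (wvar y)) (add_mset (Jdg (wopenp 0 (wvar x) A) u) D)) (wsubstj x (wvar y) J)"
      using seqc_wsubst[OF exWL.IH] by (simp add: is_world_def)
    moreover have "wsubstj x (wvar y) ` G = G" using exWL.hyps(1) by (intro wsubst_set_fresh) (simp add: wfresh_def)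
    moreover have "image_mset (wsubstj x (wvar y)) D = D" using exWL.hyps(1) by (intro wsubst_mset_fresh) (simp add: wfresh_def)
    moreover have "wsubstj x (wvar y) J = J" using exWL.hyps(1) by (intro wsubstj_fresh) (simp add: wfresh_def)
    ultimately show ?thesis using exWL.hyps(1)
      by (simp add: wsubstp_wopenp wfresh_def wsubstp_fresh wsubst_fresh)
  qed
  then show ?case by (simp add: seqc.c_exWL[of "{}"])
next
  case bangR show ?case apply (simp)? apply (rule seqc.c_bangR) using bangR by auto
next
  case bangL show ?case apply (simp)? apply (rule seqc.c_bangL) using bangL by auto
next
  case atR show ?case apply (simp)? apply (rule seqc.c_atR) using atR by auto
next
  case atL show ?case apply (simp)? apply (rule seqc.c_atL) using atL by auto
next
  case downR show ?case apply (simp)? apply (rule seqc.c_downR) using downR by auto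
next
  case downL show ?case apply (simp)? apply (rule seqc.c_downL) using downL by auto
qed

lemma seqc_seq: "seqc G D J \<Longrightarrow> finite G \<Longrightarrow> seq G D J"
proof (induction rule: seqc.induct)
  case c_init show ?case by (rule s_init)
next
  case (c_copy A u G D J) show ?case apply (rule s_copy[of A u]) using c_copy by auto
next
  case c_tensorR show ?case apply (rule s_tensorR) using c_tensorR by auto
next
  case c_tensorL show ?case apply (rule s_tensorL) using c_tensorL by auto
next
  case c_oneR show ?case by (rule s_oneR)
next
  case c_oneL show ?case apply (rule s_oneL) using c_oneL by auto
next
  case c_lolliR show ?case apply (rule s_lolliR) using c_lolliR by auto
next
  case c_lolliL show ?case apply (rule s_lolliL) using c_lolliL by auto
next
  case c_topR show ?case by (rule s_topR)
next
  case c_zeroL show ?case by (rule s_zeroL)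
next
  case c_withR show ?case apply (rule s_withR) using c_withR by auto
next
  case c_withL1 show ?case apply (rule s_withL1) using c_withL1 by auto
next
  case c_withL2 show ?case apply (rule s_withL2) using c_withL2 by auto
next
  case c_plusR1 show ?case apply (rule s_plusR1) using c_plusR1 by auto
next
  case c_plusR2 show ?case apply (rule s_plusR2) using c_plusR2 by auto
next
  case c_plusL show ?case apply (rule s_plusL) using c_plusL by auto
next
  case (c_allTR L G D A w)
  have fin: "finite (L \<union> (\<Union>j\<in>G. tfvj j) \<union> (\<Union>j\<in>set_mset D. tfvj j) \<union> tfv A)" using c_allTR by (simp add: finite_tfvj finite_wfvj fin_fv_G fin_fv_D finite_tfv finite_wfvp finite_wfv)
  then obtain x where x: "x \<notin> L \<union> (\<Union>j\<in>G. tfvj j) \<union> (\<Union>j\<in>set_mset D. tfvj j) \<union> tfv A" using fresh_nat by presburger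
  show ?case apply (rule s_allTR[of x]) using x c_allTR by (auto simp: tfresh_def)
next
  case c_allTL show ?case apply (rule s_allTL) using c_allTL by auto
next
  case c_exTR show ?case apply (rule s_exTR) using c_exTR by auto
next
  case (c_exTL L G A u D J)
  have fin: "finite (L \<union> (\<Union>j\<in>G. tfvj j) \<union> (\<Union>j\<in>set_mset D. tfvj j) \<union> (tfv A \<union> tfvj J))" using c_exTL by (simp add: finite_tfvj finite_wfvj fin_fv_G fin_fv_D finite_tfv finite_wfvp finite_wfv finite_tfvj finite_wfvj)
  then obtain x where x: "x \<notin> L \<union> (\<Union>j\<in>G. tfvj j) \<union> (\<Union>j\<in>set_mset D. tfvj j) \<union> (tfv A \<union> tfvj J)" using fresh_nat by presburger
  show ?case apply (rule s_exTL[of x]) using x c_exTL by (auto simp: tfresh_def)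
next
  case (c_allWR L G D A w)
  have fin: "finite (L \<union> (\<Union>j\<in>G. wfvj j) \<union> (\<Union>j\<in>set_mset D. wfvj j) \<union> (wfvp A \<union> wfv w))" using c_allWR by (simp add: finite_tfvj finite_wfvj fin_fv_G fin_fv_D finite_tfv finite_wfvp finite_wfv)
  then obtain x where x: "x \<notin> L \<union> (\<Union>j\<in>G. wfvj j) \<union> (\<Union>j\<in>set_mset D. wfvj j) \<union> (wfvp A \<union> wfv w)" using fresh_nat by presburger
  show ?case apply (rule s_allWR[of x]) using x c_allWR by (auto simp: wfresh_def)
next
  case c_allWL show ?case apply (rule s_allWL) using c_allWL by auto
next
  case c_exWR show ?case apply (rule s_exWR) using c_exWR by auto
next
  case (c_exWL L G A u D J)
  have fin: "finite (L \<union> (\<Union>j\<in>G. wfvj j) \<union> (\<Union>j\<in>set_mset D. wfvj j) \<union> (wfvp A \<union> wfv u \<union> wfvj J))" using c_exWL by (simp add: finite_tfvj finite_wfvj fin_fv_G fin_fv_D finite_tfv finite_wfvp finite_wfv finite_tfvj finite_wfvj)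
  then obtain x where x: "x \<notin> L \<union> (\<Union>j\<in>G. wfvj j) \<union> (\<Union>j\<in>set_mset D. wfvj j) \<union> (wfvp A \<union> wfv u \<union> wfvj J)" using fresh_nat by presburger
  show ?case apply (rule s_exWL[of x]) using x c_exWL by (auto simp: wfresh_def)
next
  case c_bangR show ?case apply (rule s_bangR) using c_bangR by auto
next
  case c_bangL show ?case apply (rule s_bangL) using c_bangL by auto
next
  case c_atR show ?case apply (rule s_atR) using c_atR by auto
next
  case c_atL show ?case apply (rule s_atL) using c_atL by auto
next
  case c_downR show ?case apply (rule s_downR) using c_downR by auto
next
  case c_downL show ?case apply (rule s_downL) using c_downL by auto
qed



lemma msplit1: "add_mset a D' = add_mset b D0 \<Longrightarrow> (a = b \<and> D' = D0) \<or> (\<exists>F. D0 = add_mset a F \<and> D' = add_mset b F)"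
proof (cases "a = b")
  case True
  assume "add_mset a D' = add_mset b D0"
  then show ?thesis using True by simp
next
  case False
  assume h: "add_mset a D' = add_mset b D0"
  then have "a \<in># add_mset b D0" by (metis union_single_eq_member)
  then have "a \<in># D0" using False by simp
  then obtain F where F: "D0 = add_mset a F" by (metis mset_add)
  then have "D' = add_mset b F" using h by (simp add: add_mset_commute)
  then show ?thesis using F by blast
qed

lemma msplit2: "add_mset a D' = Da + Db \<Longrightarrow> (\<exists>F. Da = add_mset a F \<and> D' = F + Db) \<or> (\<exists>F. Db = add_mset a F \<and> D' = Da + F)"
proof -
  assume h: "add_mset a D' = Da + Db"
  then have ab: "a \<in># Da + Db" by (metis union_single_eq_member)
  show ?thesis
  proof (cases "a \<in># Da")
    case True
    then obtain F where F: "Da = add_mset a F" by (metis mset_add)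
    then have "D' = F + Db" using h by simp
    then show ?thesis using F by blast
  next
    case False
    then have "a \<in># Db" using ab by simp
    then obtain F where F: "Db = add_mset a F" by (metis mset_add)
    then have "D' = Da + F" using h by simp
    then show ?thesis using F by blast
  qed
qed


definition cutL :: "('p, 'f, 'w::monoid_mult) hprop \<Rightarrow> bool" where
  "cutL P \<longleftrightarrow> (\<forall>G E R J a. finite G \<longrightarrow> seqc G E (Jdg P a) \<longrightarrow> seqc G (add_mset (Jdg P a) R) J
                 \<longrightarrow> seqc G (E + R) J)"

definition cutB :: "('p, 'f, 'w::monoid_mult) hprop \<Rightarrow> bool" where
  "cutB P \<longleftrightarrow> (\<forall>G D J a. finite G \<longrightarrow> seqc G {#} (Jdg P a) \<longrightarrow> seqc (insert (Jdg P a) G) D J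
                 \<longrightarrow> seqc G D J)"

lemma useL: "cutL B \<Longrightarrow> finite G \<Longrightarrow> seqc G D (Jdg B u) \<Longrightarrow> seqc G (add_mset (Jdg B u) D') J
   \<Longrightarrow> seqc G (D + D') J"
  unfolding cutL_def by blast

lemma useB: "cutB B \<Longrightarrow> finite G \<Longrightarrow> seqc G {#} (Jdg B u) \<Longrightarrow> seqc (insert (Jdg B u) G) D J
   \<Longrightarrow> seqc G D J"
  unfolding cutB_def by blast

fun rr :: "('p, 'f, 'w::monoid_mult) judg set \<Rightarrow> ('p, 'f, 'w) judg multiset
    \<Rightarrow> ('p, 'f, 'w) hprop \<Rightarrow> 'w world \<Rightarrow> bool" where
  "rr G D (Atm p ts) u = (D = {#Jdg (Atm p ts) u#})"
| "rr G D (Tensor A B) u = (\<exists>D1 D2. D = D1 + D2 \<and> seqc G D1 (Jdg A u) \<and> seqc G D2 (Jdg B u))"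
| "rr G D One u = (D = {#})"
| "rr G D (Lolli A B) u = seqc G (add_mset (Jdg A u) D) (Jdg B u)"
| "rr G D (With A B) u = (seqc G D (Jdg A u) \<and> seqc G D (Jdg B u))"
| "rr G D Top u = True"
| "rr G D (Plus A B) u = (seqc G D (Jdg A u) \<or> seqc G D (Jdg B u))"
| "rr G D Zero u = False"
| "rr G D (Bang A) u = (D = {#} \<and> seqc G {#} (Jdg A u))"
| "rr G D (AllT A) u = (\<exists>L. finite L \<and> (\<forall>x. x \<notin> L \<longrightarrow> seqc G D (Jdg (topen 0 (TFree x) A) u)))"
| "rr G D (ExT A) u = (\<exists>t. is_term t \<and> seqc G D (Jdg (topen 0 t A) u))"
| "rr G D (AtW A v) u = seqc G D (Jdg A v)"
| "rr G D (Down A) u = seqc G D (Jdg (wopenp 0 u A) u)"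
| "rr G D (AllW A) u = (\<exists>L. finite L \<and> (\<forall>x. x \<notin> L \<longrightarrow> seqc G D (Jdg (wopenp 0 (wvar x) A) u)))"
| "rr G D (ExW A) u = (\<exists>v. is_world v \<and> seqc G D (Jdg (wopenp 0 v A) u))"

lemma rr_weaken: "rr G D A u \<Longrightarrow> G \<subseteq> G' \<Longrightarrow> rr G' D A u"
  by (cases A) (auto intro: seqc_weaken)

lemma cut_inner:
  fixes P :: "('p, 'f, 'w::monoid_mult) hprop"
  assumes IHL: "\<And>B::('p, 'f, 'w) hprop. psize B < psize P \<Longrightarrow> cutL B"
    and IHB: "\<And>B::('p, 'f, 'w) hprop. psize B < psize P \<Longrightarrow> cutB B"
  shows "seqc G D2 J \<Longrightarrow> finite G \<Longrightarrow> rr G E P a \<Longrightarrow> D2 = add_mset (Jdg P a) R \<Longrightarrow> seqc G (E + R) J"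
proof (induction arbitrary: R rule: seqc.induct)
  case (c_init G p ts u)
  from c_init.prems(3) have h: "Jdg P a = Jdg (Atm p ts) u" "R = {#}"
    by (simp_all add: single_eq_add_mset)
  then have "E = {#Jdg (Atm p ts) u#}" using c_init.prems(2) by simp
  then show ?case using h by (simp add: seqc.c_init)
next
  case (c_copy A u G D J)
  show ?case apply (rule seqc.c_copy[of A u]) using c_copy.hyps(1) apply simp
    using c_copy.IH[of "add_mset (Jdg A u) R"] c_copy.prems by simp
next
  case (c_tensorR G Da A w Db B)
  from msplit2[OF c_tensorR.prems(3)[symmetric]] show ?case
  proof (elim disjE exE conjE)
    fix F assume "Da = add_mset (Jdg P a) F" "R = F + Db"
    then show ?thesis using c_tensorR.IH(1)[of F] c_tensorR.prems c_tensorR.hyps seqc.c_tensorR[of G "E+F" A w Db B]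
      by (simp add: add.assoc)
  next
    fix F assume "Db = add_mset (Jdg P a) F" "R = Da + F"
    then show ?thesis using c_tensorR.IH(2)[of F] c_tensorR.prems c_tensorR.hyps seqc.c_tensorR[of G Da A w "E+F" B]
      by (simp add: ac_simps)
  qed
next
  case (c_tensorL G A u B D J)
  from msplit1[OF c_tensorL.prems(3)[symmetric]] show ?case
  proof (elim disjE exE conjE)
    assume h: "Jdg P a = Jdg (Tensor A B) u" "R = D"
    then have P: "P = Tensor A B" "a = u" by auto
    from c_tensorL.prems(2) obtain E1 E2 where E: "E = E1 + E2" "seqc G E1 (Jdg A u)" "seqc G E2 (Jdg B u)"
      using P by auto
    have cA: "cutL A" by (rule IHL) (simp add: P)
    have cB: "cutL B" by (rule IHL) (simp add: P)
    have "seqc G (add_mset (Jdg B u) (add_mset (Jdg A u) D)) J" using c_tensorL.hyps by (simp add: add_mset_commute)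
    then have "seqc G (E2 + add_mset (Jdg A u) D) J" using useL[OF cB c_tensorL.prems(1) E(3)] by blast
    then have "seqc G (add_mset (Jdg A u) (E2 + D)) J" by simp
    then have "seqc G (E1 + (E2 + D)) J" using useL[OF cA c_tensorL.prems(1) E(2)] by blast
    then show ?thesis using E h by (simp add: ac_simps)
  next
    fix F assume "D = add_mset (Jdg P a) F" "R = add_mset (Jdg (Tensor A B) u) F"
    then show ?thesis using c_tensorL.IH[of "add_mset (Jdg A u) (add_mset (Jdg B u) F)"] c_tensorL.prems
        seqc.c_tensorL[of G A u B "E + F" J] by (simp add: add_mset_commute)
  qed
next
  case (c_oneR G w)
  then show ?case by simp
next
  case (c_oneL G D J u)
  from msplit1[OF c_oneL.prems(3)[symmetric]] show ?case
  proof (elim disjE exE conjE)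
    assume h: "Jdg P a = Jdg One u" "R = D"
    then show ?thesis using c_oneL by auto
  next
    fix F assume "D = add_mset (Jdg P a) F" "R = add_mset (Jdg One u) F"
    then show ?thesis using c_oneL.IH[of F] c_oneL.prems seqc.c_oneL[of G "E + F" J u] by simp
  qed
next
  case (c_lolliR G A w D B)
  show ?case apply (rule seqc.c_lolliR)
    using c_lolliR.IH[of "add_mset (Jdg A w) R"] c_lolliR.prems by simp
next
  case (c_lolliL G Da A u B Db J)
  from msplit1[OF c_lolliL.prems(3)[symmetric]] show ?case
  proof (elim disjE exE conjE)
    assume h: "Jdg P a = Jdg (Lolli A B) u" "R = Da + Db"
    then have P: "P = Lolli A B" "a = u" by auto
    have cA: "cutL A" by (rule IHL) (simp add: P)
    have cB: "cutL B" by (rule IHL) (simp add: P)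
    have "seqc G (add_mset (Jdg A u) E) (Jdg B u)" using c_lolliL.prems(2) P by simp
    then have "seqc G (Da + E) (Jdg B u)" using useL[OF cA c_lolliL.prems(1) c_lolliL.hyps(1)] by blast
    then have "seqc G (Da + E + Db) J" using useL[OF cB c_lolliL.prems(1) _ c_lolliL.hyps(2)] by blast
    then show ?thesis using h by (simp add: ac_simps)
  next
    fix F assume F: "Da + Db = add_mset (Jdg P a) F" "R = add_mset (Jdg (Lolli A B) u) F"
    from msplit2[OF F(1)[symmetric]] show ?thesis
    proof (elim disjE exE conjE)
      fix F1 assume "Da = add_mset (Jdg P a) F1" "F = F1 + Db"
      then show ?thesis using F c_lolliL.IH(1)[of F1] c_lolliL.prems c_lolliL.hyps
          seqc.c_lolliL[of G "E + F1" A u B Db J] by (simp add: ac_simps)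
    next
      fix F2 assume "Db = add_mset (Jdg P a) F2" "F = Da + F2"
      then show ?thesis using F c_lolliL.IH(2)[of "add_mset (Jdg B u) F2"] c_lolliL.prems c_lolliL.hyps
          seqc.c_lolliL[of G Da A u B "E + F2" J] by (simp add: ac_simps add_mset_commute)
    qed
  qed
next
  case (c_topR G D w)
  show ?case by (rule seqc.c_topR)
next
  case (c_zeroL G u D J)
  from msplit1[OF c_zeroL.prems(3)[symmetric]] show ?case
  proof (elim disjE exE conjE)
    assume h: "Jdg P a = Jdg Zero u" "R = D"
    then show ?thesis using c_zeroL by auto
  next
    fix F assume "D = add_mset (Jdg P a) F" "R = add_mset (Jdg Zero u) F"
    then show ?thesis using seqc.c_zeroL[of G u "E + F" J] by simp
  qed
next
  case (c_withR G D A w B)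
  then show ?case by (intro seqc.c_withR) auto
next
  case (c_withL1 G A u D J B)
  from msplit1[OF c_withL1.prems(3)[symmetric]] show ?case
  proof (elim disjE exE conjE)
    assume h: "Jdg P a = Jdg (With A B) u" "R = D"
    then have P: "P = With A B" "a = u" by auto
    have cA: "cutL A" by (rule IHL) (simp add: P)
    show ?thesis using useL[OF cA c_withL1.prems(1) _ c_withL1.hyps(1)] c_withL1.prems(2) P h by simp
  next
    fix F assume "D = add_mset (Jdg P a) F" "R = add_mset (Jdg (With A B) u) F"
    then show ?thesis using c_withL1.IH[of "add_mset (Jdg A u) F"] c_withL1.prems
        seqc.c_withL1[of G A u "E + F" J B] by (simp add: add_mset_commute)
  qed
next
  case (c_withL2 G B u D J A)
  from msplit1[OF c_withL2.prems(3)[symmetric]] show ?case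
  proof (elim disjE exE conjE)
    assume h: "Jdg P a = Jdg (With A B) u" "R = D"
    then have P: "P = With A B" "a = u" by auto
    have cB: "cutL B" by (rule IHL) (simp add: P)
    show ?thesis using useL[OF cB c_withL2.prems(1) _ c_withL2.hyps(1)] c_withL2.prems(2) P h by simp
  next
    fix F assume "D = add_mset (Jdg P a) F" "R = add_mset (Jdg (With A B) u) F"
    then show ?thesis using c_withL2.IH[of "add_mset (Jdg B u) F"] c_withL2.prems
        seqc.c_withL2[of G B u "E + F" J A] by (simp add: add_mset_commute)
  qed
next
  case (c_plusR1 G D A w B)
  then show ?case by (intro seqc.c_plusR1) auto
next
  case (c_plusR2 G D B w A)
  then show ?case by (intro seqc.c_plusR2) auto
next
  case (c_plusL G A u D J B)
  from msplit1[OF c_plusL.prems(3)[symmetric]] show ?case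
  proof (elim disjE exE conjE)
    assume h: "Jdg P a = Jdg (Plus A B) u" "R = D"
    then have P: "P = Plus A B" "a = u" by auto
    have cA: "cutL A" by (rule IHL) (simp add: P)
    have cB: "cutL B" by (rule IHL) (simp add: P)
    from c_plusL.prems(2) P have "seqc G E (Jdg A u) \<or> seqc G E (Jdg B u)" by simp
    then show ?thesis
    proof
      assume "seqc G E (Jdg A u)"
      then show ?thesis using useL[OF cA c_plusL.prems(1) _ c_plusL.hyps(1)] h by simp
    next
      assume "seqc G E (Jdg B u)"
      then show ?thesis using useL[OF cB c_plusL.prems(1) _ c_plusL.hyps(2)] h by simp
    qed
  next
    fix F assume "D = add_mset (Jdg P a) F" "R = add_mset (Jdg (Plus A B) u) F"
    then show ?thesis using c_plusL.IH(1)[of "add_mset (Jdg A u) F"] c_plusL.IH(2)[of "add_mset (Jdg B u) F"]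
        c_plusL.prems seqc.c_plusL[of G A u "E + F" J B] by (simp add: add_mset_commute)
  qed
next
  case (c_allTR L G D A w)
  show ?case apply (rule seqc.c_allTR[of L]) using c_allTR.hyps(1) apply simp
    subgoal for x using c_allTR.IH[of x R] c_allTR.prems by simp
    done
next
  case (c_allTL t G A u D J)
  from msplit1[OF c_allTL.prems(3)[symmetric]] show ?case
  proof (elim disjE exE conjE)
    assume h: "Jdg P a = Jdg (AllT A) u" "R = D"
    then have P: "P = AllT A" "a = u" by auto
    have cA: "cutL (topen 0 t A)" by (rule IHL) (simp add: P)
    from c_allTL.prems(2) P obtain L where L: "finite L" "\<And>x. x \<notin> L \<Longrightarrow> seqc G E (Jdg (topen 0 (TFree x) A) u)"
      by auto
    have "seqc G E (Jdg (topen 0 t A) u)" using instR_T[OF c_allTL.prems(1) L c_allTL.hyps(1)] .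
    then show ?thesis using useL[OF cA c_allTL.prems(1) _ c_allTL.hyps(2)] h by simp
  next
    fix F assume "D = add_mset (Jdg P a) F" "R = add_mset (Jdg (AllT A) u) F"
    then show ?thesis using c_allTL.IH[of "add_mset (Jdg (topen 0 t A) u) F"]
        c_allTL.prems c_allTL.hyps seqc.c_allTL[of t G A u "E + F" J] by (simp add: add_mset_commute)
  qed
next
  case (c_exTR t G D A w)
  then show ?case by (intro seqc.c_exTR[of t]) auto
next
  case (c_exTL L G A u D J)
  from msplit1[OF c_exTL.prems(3)[symmetric]] show ?case
  proof (elim disjE exE conjE)
    assume h: "Jdg P a = Jdg (ExT A) u" "R = D"
    then have P: "P = ExT A" "a = u" by auto
    from c_exTL.prems(2) P obtain t where t: "is_term t" "seqc G E (Jdg (topen 0 t A) u)"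
      by auto
    have cA: "cutL (topen 0 t A)" by (rule IHL) (simp add: P)
    have "seqc G (add_mset (Jdg (topen 0 t A) u) D) J" using instL_T[OF c_exTL.prems(1) c_exTL.hyps(1) c_exTL.hyps(2) t(1)] .
    then show ?thesis using useL[OF cA c_exTL.prems(1) t(2)] h by simp
  next
    fix F assume F: "D = add_mset (Jdg P a) F" "R = add_mset (Jdg (ExT A) u) F"
    show ?thesis unfolding F(2) apply simp apply (rule seqc.c_exTL[of L]) using c_exTL.hyps(1) apply simp
      subgoal for x using c_exTL.IH[of x "add_mset (Jdg (topen 0 (TFree x) A) u) F"] c_exTL.prems F
        by (simp add: add_mset_commute)
      done
  qed
next
  case (c_allWR L G D A w)
  show ?case apply (rule seqc.c_allWR[of L]) using c_allWR.hyps(1) apply simp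
    subgoal for x using c_allWR.IH[of x R] c_allWR.prems by simp
    done
next
  case (c_allWL v G A u D J)
  from msplit1[OF c_allWL.prems(3)[symmetric]] show ?case
  proof (elim disjE exE conjE)
    assume h: "Jdg P a = Jdg (AllW A) u" "R = D"
    then have P: "P = AllW A" "a = u" by auto
    have cA: "cutL (wopenp 0 v A)" by (rule IHL) (simp add: P)
    from c_allWL.prems(2) P obtain L where L: "finite L" "\<And>x. x \<notin> L \<Longrightarrow> seqc G E (Jdg (wopenp 0 (wvar x) A) u)"
      by auto
    have "seqc G E (Jdg (wopenp 0 v A) u)" using instR_W[OF c_allWL.prems(1) L c_allWL.hyps(1)] .
    then show ?thesis using useL[OF cA c_allWL.prems(1) _ c_allWL.hyps(2)] h by simp
  next
    fix F assume "D = add_mset (Jdg P a) F" "R = add_mset (Jdg (AllW A) u) F"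
    then show ?thesis using c_allWL.IH[of "add_mset (Jdg (wopenp 0 v A) u) F"]
        c_allWL.prems c_allWL.hyps seqc.c_allWL[of v G A u "E + F" J] by (simp add: add_mset_commute)
  qed
next
  case (c_exWR v G D A w)
  then show ?case by (intro seqc.c_exWR[of v]) auto
next
  case (c_exWL L G A u D J)
  from msplit1[OF c_exWL.prems(3)[symmetric]] show ?case
  proof (elim disjE exE conjE)
    assume h: "Jdg P a = Jdg (ExW A) u" "R = D"
    then have P: "P = ExW A" "a = u" by auto
    from c_exWL.prems(2) P obtain v where v: "is_world v" "seqc G E (Jdg (wopenp 0 v A) u)"
      by auto
    have cA: "cutL (wopenp 0 v A)" by (rule IHL) (simp add: P)
    have "seqc G (add_mset (Jdg (wopenp 0 v A) u) D) J" using instL_W[OF c_exWL.prems(1) c_exWL.hyps(1) c_exWL.hyps(2) v(1)] .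
    then show ?thesis using useL[OF cA c_exWL.prems(1) v(2)] h by simp
  next
    fix F assume F: "D = add_mset (Jdg P a) F" "R = add_mset (Jdg (ExW A) u) F"
    show ?thesis unfolding F(2) apply simp apply (rule seqc.c_exWL[of L]) using c_exWL.hyps(1) apply simp
      subgoal for x using c_exWL.IH[of x "add_mset (Jdg (wopenp 0 (wvar x) A) u) F"] c_exWL.prems F
        by (simp add: add_mset_commute)
      done
  qed
next
  case (c_bangR G A w)
  then show ?case by simp
next
  case (c_bangL A u G D J)
  from msplit1[OF c_bangL.prems(3)[symmetric]] show ?case
  proof (elim disjE exE conjE)
    assume h: "Jdg P a = Jdg (Bang A) u" "R = D"
    then have P: "P = Bang A" "a = u" by auto
    have cA: "cutB A" by (rule IHB) (simp add: P)
    from c_bangL.prems(2) P have "E = {#}" "seqc G {#} (Jdg A u)" by auto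
    then show ?thesis using useB[OF cA c_bangL.prems(1) _ c_bangL.hyps(1)] h by simp
  next
    fix F assume "D = add_mset (Jdg P a) F" "R = add_mset (Jdg (Bang A) u) F"
    moreover have "rr (insert (Jdg A u) G) E P a" using rr_weaken[OF c_bangL.prems(2)] by blast
    ultimately show ?thesis using c_bangL.IH[of F] c_bangL.prems
        seqc.c_bangL[of A u G "E + F" J] by simp
  qed
next
  case (c_atR G D A u v)
  then show ?case by (intro seqc.c_atR) auto
next
  case (c_atL G A u D J v)
  from msplit1[OF c_atL.prems(3)[symmetric]] show ?case
  proof (elim disjE exE conjE)
    assume h: "Jdg P a = Jdg (AtW A u) v" "R = D"
    then have P: "P = AtW A u" "a = v" by auto
    have cA: "cutL A" by (rule IHL) (simp add: P)
    show ?thesis using useL[OF cA c_atL.prems(1) _ c_atL.hyps(1)] c_atL.prems(2) P h by simp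
  next
    fix F assume "D = add_mset (Jdg P a) F" "R = add_mset (Jdg (AtW A u) v) F"
    then show ?thesis using c_atL.IH[of "add_mset (Jdg A u) F"] c_atL.prems
        seqc.c_atL[of G A u "E + F" J v] by (simp add: add_mset_commute)
  qed
next
  case (c_downR G D w A)
  then show ?case by (intro seqc.c_downR) auto
next
  case (c_downL G v A D J)
  from msplit1[OF c_downL.prems(3)[symmetric]] show ?case
  proof (elim disjE exE conjE)
    assume h: "Jdg P a = Jdg (Down A) v" "R = D"
    then have P: "P = Down A" "a = v" by auto
    have cA: "cutL (wopenp 0 v A)" by (rule IHL) (simp add: P)
    show ?thesis using useL[OF cA c_downL.prems(1) _ c_downL.hyps(1)] c_downL.prems(2) P h by simp
  next
    fix F assume "D = add_mset (Jdg P a) F" "R = add_mset (Jdg (Down A) v) F"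
    then show ?thesis using c_downL.IH[of "add_mset (Jdg (wopenp 0 v A) v) F"] c_downL.prems
        seqc.c_downL[of G v A "E + F" J] by (simp add: add_mset_commute)
  qed
qed

lemma cut_rr:
  fixes P :: "('p, 'f, 'w::monoid_mult) hprop"
  assumes IHL: "\<And>B::('p, 'f, 'w) hprop. psize B < psize P \<Longrightarrow> cutL B"
    and IHB: "\<And>B::('p, 'f, 'w) hprop. psize B < psize P \<Longrightarrow> cutB B"
  shows "seqc G (add_mset (Jdg P a) R) J \<Longrightarrow> finite G \<Longrightarrow> rr G E P a \<Longrightarrow> seqc G (E + R) J"
  using cut_inner[OF IHL IHB] by blast

lemma cut_outer:
  fixes P :: "('p, 'f, 'w::monoid_mult) hprop"
  assumes IHL: "\<And>B::('p, 'f, 'w) hprop. psize B < psize P \<Longrightarrow> cutL B"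
    and IHB: "\<And>B::('p, 'f, 'w) hprop. psize B < psize P \<Longrightarrow> cutB B"
  shows "seqc G E K \<Longrightarrow> K = Jdg P a \<Longrightarrow> finite G \<Longrightarrow> seqc G (add_mset (Jdg P a) R) Jc \<Longrightarrow> seqc G (E + R) Jc"
proof -
  have inner: "\<And>G R J E a. seqc G (add_mset (Jdg P a) R) J \<Longrightarrow> finite G \<Longrightarrow> rr G E P a \<Longrightarrow> seqc G (E + R) J"
    using cut_inner[OF IHL IHB] by blast
  show "seqc G E K \<Longrightarrow> K = Jdg P a \<Longrightarrow> finite G \<Longrightarrow> seqc G (add_mset (Jdg P a) R) Jc \<Longrightarrow> seqc G (E + R) Jc"
proof (induction arbitrary: R Jc rule: seqc.induct)
  case (c_init G p ts u)
  have rr: "rr G ({#Jdg (Atm p ts) u#}) P a" using c_init by (auto)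
  then show ?case using inner[OF c_init.prems(3) c_init.prems(2) rr] by blast
next
  case (c_copy A u G D J)
  show ?case apply (rule seqc.c_copy[of A u]) using c_copy by auto
next
  case (c_tensorR G D A w D2 B)
  have P: "P = Tensor A B" "a = w" using c_tensorR.prems(1) by auto
  have rr: "rr G (D + D2) P a" unfolding P rr.simps using c_tensorR.hyps by blast
  then show ?case using inner[OF c_tensorR.prems(3) c_tensorR.prems(2) rr] by blast
next
  case (c_tensorL G A u B D J)
  show ?case apply simp apply (rule seqc.c_tensorL) using c_tensorL by auto
next
  case (c_oneR G w)
  have rr: "rr G ({#}) P a" using c_oneR by (auto)
  then show ?case using inner[OF c_oneR.prems(3) c_oneR.prems(2) rr] by blast
next
  case (c_oneL G D J u)
  show ?case apply simp apply (rule seqc.c_oneL) using c_oneL by auto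
next
  case (c_lolliR G A w D B)
  have rr: "rr G (D) P a" using c_lolliR by (auto)
  then show ?case using inner[OF c_lolliR.prems(3) c_lolliR.prems(2) rr] by blast
next
  case (c_lolliL G D A u B D2 J)
  show ?case using c_lolliL.IH(2)[of R Jc] c_lolliL.prems c_lolliL.hyps seqc.c_lolliL[of G D A u B "D2 + R" Jc] by (simp add: ac_simps)
next
  case (c_topR G D w)
  have rr: "rr G (D) P a" using c_topR by (auto)
  then show ?case using inner[OF c_topR.prems(3) c_topR.prems(2) rr] by blast
next
  case (c_zeroL G u D J)
  show ?case by (simp add: seqc.c_zeroL)
next
  case (c_withR G D A w B)
  have rr: "rr G (D) P a" using c_withR by (auto)
  then show ?case using inner[OF c_withR.prems(3) c_withR.prems(2) rr] by blast
next
  case (c_withL1 G A u D J B)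
  show ?case apply simp apply (rule seqc.c_withL1) using c_withL1 by auto
next
  case (c_withL2 G B u D J A)
  show ?case apply simp apply (rule seqc.c_withL2) using c_withL2 by auto
next
  case (c_plusR1 G D A w B)
  have rr: "rr G (D) P a" using c_plusR1 by (auto)
  then show ?case using inner[OF c_plusR1.prems(3) c_plusR1.prems(2) rr] by blast
next
  case (c_plusR2 G D B w A)
  have rr: "rr G (D) P a" using c_plusR2 by (auto)
  then show ?case using inner[OF c_plusR2.prems(3) c_plusR2.prems(2) rr] by blast
next
  case (c_plusL G A u D J B)
  show ?case using c_plusL.IH(1)[of R Jc] c_plusL.IH(2)[of R Jc] c_plusL.prems seqc.c_plusL[of G A u "D + R" Jc B] by simp
next
  case (c_allTR L G D A w)
  have rr: "rr G (D) P a" using c_allTR by (auto intro!: exI[of _ L])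
  then show ?case using inner[OF c_allTR.prems(3) c_allTR.prems(2) rr] by blast
next
  case (c_allTL t G A u D J)
  show ?case apply simp apply (rule seqc.c_allTL) using c_allTL by auto
next
  case (c_exTR t G D A w)
  have rr: "rr G (D) P a" using c_exTR by (auto intro!: exI[of _ t])
  then show ?case using inner[OF c_exTR.prems(3) c_exTR.prems(2) rr] by blast
next
  case (c_exTL L G A u D J)
  show ?case apply simp apply (rule seqc.c_exTL[of L]) using c_exTL.hyps(1) apply simp
    subgoal for x using c_exTL.IH[of x R Jc] c_exTL.prems by simp
    done
next
  case (c_allWR L G D A w)
  have rr: "rr G (D) P a" using c_allWR by (auto intro!: exI[of _ L])
  then show ?case using inner[OF c_allWR.prems(3) c_allWR.prems(2) rr] by blast
next
  case (c_allWL v G A u D J)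
  show ?case apply simp apply (rule seqc.c_allWL) using c_allWL by auto
next
  case (c_exWR v G D A w)
  have rr: "rr G (D) P a" using c_exWR by (auto intro!: exI[of _ v])
  then show ?case using inner[OF c_exWR.prems(3) c_exWR.prems(2) rr] by blast
next
  case (c_exWL L G A u D J)
  show ?case apply simp apply (rule seqc.c_exWL[of L]) using c_exWL.hyps(1) apply simp
    subgoal for x using c_exWL.IH[of x R Jc] c_exWL.prems by simp
    done
next
  case (c_bangR G A w)
  have rr: "rr G ({#}) P a" using c_bangR by (auto)
  then show ?case using inner[OF c_bangR.prems(3) c_bangR.prems(2) rr] by blast
next
  case (c_bangL A u G D J)
  have "seqc (insert (Jdg A u) G) (add_mset (Jdg P a) R) Jc" using c_bangL.prems(3) by (rule seqc_weaken) blast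
  then show ?case using c_bangL.IH[of R Jc] c_bangL.prems seqc.c_bangL[of A u G "D + R" Jc] by simp
next
  case (c_atR G D A u v)
  have rr: "rr G (D) P a" using c_atR by (auto)
  then show ?case using inner[OF c_atR.prems(3) c_atR.prems(2) rr] by blast
next
  case (c_atL G A u D J v)
  show ?case apply simp apply (rule seqc.c_atL) using c_atL by auto
next
  case (c_downR G D w A)
  have rr: "rr G (D) P a" using c_downR by (auto)
  then show ?case using inner[OF c_downR.prems(3) c_downR.prems(2) rr] by blast
next
  case (c_downL G v A D J)
  show ?case apply simp apply (rule seqc.c_downL) using c_downL by auto
qed
qed

lemma cut_bang:
  fixes P :: "('p, 'f, 'w::monoid_mult) hprop"
  assumes CL: "cutL P"
  shows "seqc G' D J \<Longrightarrow> G' = insert (Jdg P a) H \<Longrightarrow> finite H \<Longrightarrow> seqc H {#} (Jdg P a) \<Longrightarrow> seqc H D J"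
proof (induction arbitrary: H rule: seqc.induct)
  case (c_init G p ts u)
  show ?case by (rule seqc.c_init)
next
  case (c_copy A u G D J)
  show ?case
  proof (cases "Jdg A u = Jdg P a")
    case True
    then have "seqc H (add_mset (Jdg P a) D) J" using c_copy.IH c_copy.prems by simp
    then show ?thesis using useL[OF CL c_copy.prems(2,3)] by simp
  next
    case False
    then have "Jdg A u \<in> H" using c_copy.hyps(1) c_copy.prems(1) by auto
    then show ?thesis apply (rule seqc.c_copy[of A u]) using c_copy.IH c_copy.prems by simp
  qed
next
  case (c_tensorR G D A w D2 B)
  show ?case apply (rule seqc.c_tensorR) using c_tensorR by auto
next
  case (c_tensorL G A u B D J)
  show ?case apply (rule seqc.c_tensorL) using c_tensorL by auto
next
  case (c_oneR G w)
  show ?case by (rule seqc.c_oneR)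
next
  case (c_oneL G D J u)
  show ?case apply (rule seqc.c_oneL) using c_oneL by auto
next
  case (c_lolliR G A w D B)
  show ?case apply (rule seqc.c_lolliR) using c_lolliR by auto
next
  case (c_lolliL G D A u B D2 J)
  show ?case apply (rule seqc.c_lolliL) using c_lolliL by auto
next
  case (c_topR G D w)
  show ?case by (rule seqc.c_topR)
next
  case (c_zeroL G u D J)
  show ?case by (rule seqc.c_zeroL)
next
  case (c_withR G D A w B)
  show ?case apply (rule seqc.c_withR) using c_withR by auto
next
  case (c_withL1 G A u D J B)
  show ?case apply (rule seqc.c_withL1) using c_withL1 by auto
next
  case (c_withL2 G B u D J A)
  show ?case apply (rule seqc.c_withL2) using c_withL2 by auto
next
  case (c_plusR1 G D A w B)
  show ?case apply (rule seqc.c_plusR1) using c_plusR1 by auto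
next
  case (c_plusR2 G D B w A)
  show ?case apply (rule seqc.c_plusR2) using c_plusR2 by auto
next
  case (c_plusL G A u D J B)
  show ?case apply (rule seqc.c_plusL) using c_plusL by auto
next
  case (c_allTR L G D A w)
  show ?case apply (rule seqc.c_allTR[of L]) using c_allTR.hyps(1) apply simp
    subgoal for x using c_allTR.IH[of x H] c_allTR.prems by simp
    done
next
  case (c_allTL t G A u D J)
  show ?case apply (rule seqc.c_allTL[of t]) using c_allTL by auto
next
  case (c_exTR t G D A w)
  show ?case apply (rule seqc.c_exTR[of t]) using c_exTR by auto
next
  case (c_exTL L G A u D J)
  show ?case apply (rule seqc.c_exTL[of L]) using c_exTL.hyps(1) apply simp
    subgoal for x using c_exTL.IH[of x H] c_exTL.prems by simp
    done
next
  case (c_allWR L G D A w)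
  show ?case apply (rule seqc.c_allWR[of L]) using c_allWR.hyps(1) apply simp
    subgoal for x using c_allWR.IH[of x H] c_allWR.prems by simp
    done
next
  case (c_allWL v G A u D J)
  show ?case apply (rule seqc.c_allWL[of v]) using c_allWL by auto
next
  case (c_exWR v G D A w)
  show ?case apply (rule seqc.c_exWR[of v]) using c_exWR by auto
next
  case (c_exWL L G A u D J)
  show ?case apply (rule seqc.c_exWL[of L]) using c_exWL.hyps(1) apply simp
    subgoal for x using c_exWL.IH[of x H] c_exWL.prems by simp
    done
next
  case (c_bangR G A w)
  show ?case apply (rule seqc.c_bangR) using c_bangR by auto
next
  case (c_bangL A u G D J)
  have "seqc (insert (Jdg A u) H) {#} (Jdg P a)" using c_bangL.prems(3) by (rule seqc_weaken) blast
  then have "seqc (insert (Jdg A u) H) D J" using c_bangL.IH[of "insert (Jdg A u) H"] c_bangL.prems by (simp add: insert_commute)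
  then show ?case by (rule seqc.c_bangL)
next
  case (c_atR G D A u v)
  show ?case apply (rule seqc.c_atR) using c_atR by auto
next
  case (c_atL G A u D J v)
  show ?case apply (rule seqc.c_atL) using c_atL by auto
next
  case (c_downR G D w A)
  show ?case apply (rule seqc.c_downR) using c_downR by auto
next
  case (c_downL G v A D J)
  show ?case apply (rule seqc.c_downL) using c_downL by auto
qed

lemma cut_all: "cutL (P::('p, 'f, 'w::monoid_mult) hprop) \<and> cutB P"
proof (induction "psize P" arbitrary: P rule: less_induct)
  case less
  have IHL: "\<And>B::('p, 'f, 'w) hprop. psize B < psize P \<Longrightarrow> cutL B" using less by blast
  have IHB: "\<And>B::('p, 'f, 'w) hprop. psize B < psize P \<Longrightarrow> cutB B" using less by blast
  have CL: "cutL P" unfolding cutL_def using cut_outer[OF IHL IHB] by blast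
  have CB: "cutB P" unfolding cutB_def using cut_bang[OF CL] by blast
  show ?case using CL CB by blast
qed


theorem theorem1:
  fixes G :: "('p, 'f, 'w::monoid_mult) judg set"
    and D D' :: "('p, 'f, 'w) judg multiset"
    and A C :: "('p, 'f, 'w) hprop"
    and u w :: "'w world"
  assumes "finite G" and "\<forall>j\<in>G. is_judg j" and "\<forall>j\<in>#D. is_judg j"
    and "is_prop A" and "is_prop C" and "is_world u" and "is_world w"
  shows "((\<forall>j\<in>#D'. is_judg j) \<and> seq G D (Jdg A u) \<and> seq G (D' + {# Jdg A u #}) (Jdg C w)
            \<longrightarrow> seq G (D + D') (Jdg C w))
       \<and> (seq G {#} (Jdg A u) \<and> seq (insert (Jdg A u) G) D (Jdg C w)
            \<longrightarrow> seq G D (Jdg C w))"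
proof -
  have CL: "cutL A" and CB: "cutB A" using cut_all by blast+
  show ?thesis
  proof (intro conjI impI)
    assume h: "(\<forall>j\<in>#D'. is_judg j) \<and> seq G D (Jdg A u) \<and> seq G (D' + {# Jdg A u #}) (Jdg C w)"
    then have "seqc G D (Jdg A u)" "seqc G (add_mset (Jdg A u) D') (Jdg C w)"
      using seq_seqc[of G D "Jdg A u"] seq_seqc[of G "D' + {# Jdg A u #}" "Jdg C w"] by auto
    then have "seqc G (D + D') (Jdg C w)" using useL[OF CL assms(1)] by blast
    then show "seq G (D + D') (Jdg C w)" using seqc_seq assms(1) by blast
  next
    assume h: "seq G {#} (Jdg A u) \<and> seq (insert (Jdg A u) G) D (Jdg C w)"
    then have "seqc G {#} (Jdg A u)" "seqc (insert (Jdg A u) G) D (Jdg C w)"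
      using seq_seqc by auto
    then have "seqc G D (Jdg C w)" using useB[OF CB assms(1)] by blast
    then show "seq G D (Jdg C w)" using seqc_seq assms(1) by blast
  qed
qed

end
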